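(* Let $f_1,\dots,f_n:\mathbb{R}^d\to\mathbb{R}$ be convex, each $f_i$ being $L_i$-smooth with minimizer $x_i$. Let $\alpha_i\in(0,1)$, $T_i(x)=\alpha_ix+(1-\alpha_i)x_i$, $\tilde f(x)=\frac1n\sum_if_i(T_i(x))$, let $x^*$ be a minimizer of $\tilde f$, and $L_\alpha=\frac1n\sum_i\alpha_i^2L_i$. Let $\omega_i\ge0$ and $\beta_i\in(0,\frac{1}{\omega_i+1}]$. Consider DIANA applied to $\tilde f$: given $x^0,h_1^0,\dots,h_n^0$, for $k\ge0$ set $\Delta_i^k=\alpha_i\nabla f_i(T_i(x^k))-h_i^k$, $\hat\Delta_i^k=\mathcal{C}_i^k(\Delta_i^k)$, $h_i^{k+1}=h_i^k+\beta_i\hat\Delta_i^k$, $g^k=\frac1n\sum_i(h_i^k+\hat\Delta_i^k)$, $x^{k+1}=x^k-\gamma g^k$, with $\mathcal{C}_i^k\in\mathbb{B}^d(\omega_i)$ drawn independently across $i,k$. Let $\sigma_0^2=\frac1n\sum_i\omega_i\|h_i^0-\alpha_i\nabla f_i(T_i(x^* ))\|^2$ and $\overline{x}^k=\frac1k\sum_{j=1}^kx^j$. If \[0<\gamma\leq\frac{1}{4\left(L_\alpha+\frac{2\max_i\{L_i\alpha_i^2\omega_i\}}{n}+\frac{4\max_i\{\beta_i\omega_iL_i\alpha_i^2\}}{n\min_i\beta_i}\right)},\] then \[\mathbb{E}[\tilde f(\overline{x}^k)-\tilde f(x^* )]\leq\left(2(\tilde f(x^0)-\tilde f(x^* ))+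\frac{4\gamma}{n\min_i\beta_i}\sigma_0^2+\frac1\gamma\|x^0-x^*\|^2\right)\frac1k.\]
   Context: A (random) operator $\mathcal{C}$ belongs to $\mathbb{B}^d(\omega)$ if $\mathbb{E}[\mathcal{C}(x)] = x$ and $\mathbb{E}\|\mathcal{C}(x)-x\|^2\leq\omega\|x\|^2$ for all $x$. A differentiable $g$ is $L$-smooth if $\|\nabla g(x)-\nabla g(y)\|\leq L\|x-y\|$ for all $x,y$. *)

theory Defs
  imports "HOL-Probability.Probability"
begin

definition shiftT :: "real \<Rightarrow> 'a::real_vector \<Rightarrow> 'a \<Rightarrow> 'a" where
  "shiftT a xi x = a *\<^sub>R x + (1 - a) *\<^sub>R xi"

definition ftilde :: "nat \<Rightarrow> (nat \<Rightarrow> 'a::real_vector \<Rightarrow> real) \<Rightarrow> (nat \<Rightarrow> real) \<Rightarrow> (nat \<Rightarrow> 'a) \<Rightarrow> 'a \<Rightarrow> real" where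
  "ftilde n f \<alpha> xm x = (1 / real n) * (\<Sum>i<n. f i (shiftT (\<alpha> i) (xm i) x))"

end

theory Submission
  imports Defs
begin

lemma gradient_ineq:
  fixes F :: "'a::real_inner \<Rightarrow> real"
  assumes cvx: "convex_on UNIV F" and d: "GDERIV F x :> D"
  shows "F x + D \<bullet> (y - x) \<le> F y"
proof -
  let ?d = "y - x"
  have der: "((\<lambda>t. F (x + t *\<^sub>R ?d)) has_real_derivative (D \<bullet> ?d)) (at 0)"
  proof -
    have a: "((\<lambda>t. x + t *\<^sub>R ?d) has_derivative (\<lambda>t. t *\<^sub>R ?d)) (at 0)"
      by (auto intro!: derivative_eq_intros)
    have b: "(F has_derivative (\<lambda>h. h \<bullet> D)) (at (x + 0 *\<^sub>R ?d))"
      using d by (simp add: gderiv_def)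
    have "((\<lambda>t. F (x + t *\<^sub>R ?d)) has_derivative (\<lambda>t. (t *\<^sub>R ?d) \<bullet> D)) (at 0)"
      using has_derivative_compose[OF a b] by (simp add: o_def)
    moreover have eq: "(*) (D \<bullet> ?d) = (\<lambda>t. t * (D \<bullet> ?d))" by (rule ext) simp
    ultimately show ?thesis
      unfolding has_field_derivative_def eq by (simp add: inner_commute)
  qed
  then have lim: "((\<lambda>t. (F (x + t *\<^sub>R ?d) - F x) / t) \<longlongrightarrow> D \<bullet> ?d) (at_right 0)"
    unfolding DERIV_def by (simp add: filterlim_at_split)
  have ev: "\<forall>\<^sub>F t in at_right 0. (F (x + t *\<^sub>R ?d) - F x) / t \<le> F y - F x"
    unfolding eventually_at_right_field
  proof (rule exI[of _ 1], intro conjI allI impI)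
    fix t :: real assume t0: "0 < t" and t1: "t < 1"
    note t = t0 t1
    have "F ((1 - t) *\<^sub>R x + t *\<^sub>R y) \<le> (1 - t) * F x + t * F y"
      using t cvx by (intro convex_onD) auto
    moreover have "(1 - t) *\<^sub>R x + t *\<^sub>R y = x + t *\<^sub>R ?d" by (simp add: algebra_simps)
    ultimately have "F (x + t *\<^sub>R ?d) - F x \<le> t * (F y - F x)" by (simp add: algebra_simps)
    then show "(F (x + t *\<^sub>R ?d) - F x) / t \<le> F y - F x" using t by (simp add: divide_simps mult.commute)
  qed simp
  have "D \<bullet> ?d \<le> F y - F x"
    by (rule tendsto_upperbound[OF lim ev]) simp
  then show ?thesis by simp
qed

lemma descent:
  fixes F :: "'a::real_inner \<Rightarrow> real"
  assumes d: "\<And>z. GDERIV F z :> DF z"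
    and lip: "\<And>y z. norm (DF y - DF z) \<le> L * norm (y - z)"
  shows "F y \<le> F x + DF x \<bullet> (y - x) + L / 2 * (norm (y - x))\<^sup>2"
proof -
  let ?d = "y - x"
  define g where "g t = F (x + t *\<^sub>R ?d) - t * (DF x \<bullet> ?d) - L / 2 * t\<^sup>2 * (norm ?d)\<^sup>2" for t
  have dg: "(g has_real_derivative ((DF (x + t *\<^sub>R ?d) - DF x) \<bullet> ?d - L * t * (norm ?d)\<^sup>2)) (at t)" for t
  proof -
    have a: "((\<lambda>t. x + t *\<^sub>R ?d) has_derivative (\<lambda>s. s *\<^sub>R ?d)) (at t)"
      by (auto intro!: derivative_eq_intros)
    have b: "(F has_derivative (\<lambda>h. h \<bullet> DF (x + t *\<^sub>R ?d))) (at (x + t *\<^sub>R ?d))"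
      using d by (simp add: gderiv_def)
    have c: "((\<lambda>t. F (x + t *\<^sub>R ?d)) has_derivative (\<lambda>s. (s *\<^sub>R ?d) \<bullet> DF (x + t *\<^sub>R ?d))) (at t)"
      using has_derivative_compose[OF a b] by (simp add: o_def)
    have eq: "(\<lambda>s. (s *\<^sub>R ?d) \<bullet> DF (x + t *\<^sub>R ?d)) = (*) (DF (x + t *\<^sub>R ?d) \<bullet> ?d)"
      by (rule ext) (simp add: inner_commute)
    have c': "((\<lambda>t. F (x + t *\<^sub>R ?d)) has_real_derivative (DF (x + t *\<^sub>R ?d) \<bullet> ?d)) (at t)"
      using c unfolding has_field_derivative_def eq .
    have h1: "((\<lambda>t. t * (DF x \<bullet> ?d)) has_real_derivative (DF x \<bullet> ?d)) (at t)"
      by (auto intro!: derivative_eq_intros)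
    have h2: "((\<lambda>t. L / 2 * t\<^sup>2 * (norm ?d)\<^sup>2) has_real_derivative (L * t * (norm ?d)\<^sup>2)) (at t)"
      by (auto intro!: derivative_eq_intros)
    have "(g has_real_derivative (DF (x + t *\<^sub>R ?d) \<bullet> ?d - DF x \<bullet> ?d - L * t * (norm ?d)\<^sup>2)) (at t)"
      unfolding g_def by (rule DERIV_diff[OF DERIV_diff[OF c' h1] h2])
    then show ?thesis by (simp add: inner_diff_left)
  qed
  have "g 1 \<le> g 0"
  proof (rule DERIV_nonpos_imp_nonincreasing[of 0 1 g])
    fix t :: real assume t: "0 \<le> t" "t \<le> 1"
    have "(DF (x + t *\<^sub>R ?d) - DF x) \<bullet> ?d \<le> norm (DF (x + t *\<^sub>R ?d) - DF x) * norm ?d"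
      by (rule norm_cauchy_schwarz)
    also have "\<dots> \<le> L * norm (t *\<^sub>R ?d) * norm ?d"
      using lip[of "x + t *\<^sub>R ?d" x] by (intro mult_right_mono) auto
    also have "\<dots> = L * t * (norm ?d)\<^sup>2" using t by (simp add: power2_eq_square)
    finally have "(DF (x + t *\<^sub>R ?d) - DF x) \<bullet> ?d - L * t * (norm ?d)\<^sup>2 \<le> 0" by simp
    then show "\<exists>y. (g has_real_derivative y) (at t) \<and> y \<le> 0" using dg by blast
  qed simp
  then show ?thesis unfolding g_def by simp
qed

lemma L_nonneg:
  fixes DF :: "'a::euclidean_space \<Rightarrow> 'a"
  assumes lip: "\<And>y z. norm (DF y - DF z) \<le> L * norm (y - z)"
  shows "0 \<le> L"
proof -
  obtain b :: 'a where b: "b \<in> Basis" using nonempty_Basis by blast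
  have "0 \<le> L * norm (b - 0)" using lip[of b 0] norm_ge_zero order_trans by blast
  then show ?thesis using b by (simp add: zero_le_mult_iff)
qed

lemma first_order:
  fixes F :: "'a::real_inner \<Rightarrow> real"
  assumes d: "GDERIV F x :> D" and m: "\<And>y. F x \<le> F y"
  shows "D = 0"
proof -
  have "(\<lambda>h. h \<bullet> D) = (\<lambda>v. 0)"
    using d m by (intro differential_zero_maxmin[of x UNIV F]) (auto simp: gderiv_def)
  then have "D \<bullet> D = 0" by meson
  then show ?thesis by simp
qed

lemma cocoercive:
  fixes F :: "'a::euclidean_space \<Rightarrow> real"
  assumes d: "\<And>z. GDERIV F z :> DF z"
    and lip: "\<And>y z. norm (DF y - DF z) \<le> L * norm (y - z)"
    and gi: "\<And>y z. F z + DF z \<bullet> (y - z) \<le> F y"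
  shows "(norm (DF x - DF y))\<^sup>2 \<le> 2 * L * (F x - F y - DF y \<bullet> (x - y))"
proof -
  have L0: "0 \<le> L" by (rule L_nonneg[OF lip])
  define P where "P z = F z - DF y \<bullet> z" for z
  have dP: "GDERIV P z :> DF z - DF y" for z
  proof -
    have "GDERIV (\<lambda>z. DF y \<bullet> z) z :> DF y"
      unfolding gderiv_def by (auto intro!: derivative_eq_intros simp: inner_commute)
    then show ?thesis unfolding P_def by (intro GDERIV_diff d)
  qed
  have lipP: "norm ((DF a - DF y) - (DF b - DF y)) \<le> L * norm (a - b)" for a b
    using lip[of a b] by simp
  have minP: "P y \<le> P z" for z
    using gi[where y=z and z=y] unfolding P_def by (simp add: inner_diff_right)
  show ?thesis
  proof (cases "L = 0")
    case True
    then have "DF x = DF y" using lip[of x y] by simp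
    then show ?thesis using True by simp
  next
    case False
    with L0 have Lp: "0 < L" by simp
    let ?g = "DF x - DF y"
    let ?z = "x - (1 / L) *\<^sub>R ?g"
    have "P ?z \<le> P x + ?g \<bullet> (?z - x) + L / 2 * (norm (?z - x))\<^sup>2"
      by (rule descent[of P "\<lambda>z. DF z - DF y", OF dP lipP])
    also have "\<dots> = P x - (norm ?g)\<^sup>2 / (2 * L)"
    proof -
      have e1: "?z - x = - ((1 / L) *\<^sub>R ?g)" by simp
      have e2: "?g \<bullet> (?z - x) = - (1 / L) * (norm ?g)\<^sup>2"
        unfolding e1 by (simp add: power2_norm_eq_inner)
      have e3: "(norm (?z - x))\<^sup>2 = (1 / L)\<^sup>2 * (norm ?g)\<^sup>2"
        unfolding e1 using Lp by (simp add: power_divide)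
      show ?thesis unfolding e2 e3 using Lp by (simp add: field_simps power2_eq_square)
    qed
    finally have "(norm ?g)\<^sup>2 / (2 * L) \<le> P x - P y" using minP[of ?z] by simp
    then have "(norm ?g)\<^sup>2 \<le> 2 * L * (P x - P y)" using Lp by (simp add: field_simps)
    then show ?thesis unfolding P_def by (simp add: inner_diff_right algebra_simps)
  qed
qed

locale detset =
  fixes n :: nat
    and f :: "nat \<Rightarrow> 'a::euclidean_space \<Rightarrow> real"
    and G :: "nat \<Rightarrow> 'a \<Rightarrow> 'a"
    and L :: "nat \<Rightarrow> real"
    and xm :: "nat \<Rightarrow> 'a"
    and \<alpha> :: "nat \<Rightarrow> real"
    and xs :: 'a
  assumes n_pos: "n \<ge> 1"
    and convex: "\<And>i. i < n \<Longrightarrow> convex_on UNIV (f i)"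
    and grad: "\<And>i y. i < n \<Longrightarrow> GDERIV (f i) y :> G i y"
    and smooth: "\<And>i y z. i < n \<Longrightarrow> norm (G i y - G i z) \<le> L i * norm (y - z)"
    and alpha: "\<And>i. i < n \<Longrightarrow> 0 < \<alpha> i \<and> \<alpha> i < 1"
    and minim: "\<And>y. ftilde n f \<alpha> xm xs \<le> ftilde n f \<alpha> xm y"
begin

definition "gi i x = \<alpha> i *\<^sub>R G i (shiftT (\<alpha> i) (xm i) x)"
definition "phi i x = f i (shiftT (\<alpha> i) (xm i) x)"
abbreviation "Ft \<equiv> ftilde n f \<alpha> xm"
definition "gF x = (1 / real n) *\<^sub>R (\<Sum>i<n. gi i x)"
definition "Lt = (1 / real n) * (\<Sum>i<n. (\<alpha> i)\<^sup>2 * L i)"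
definition "hs i = gi i xs"
definition "Dl x = Ft x - Ft xs"
definition "Di i x = phi i x - phi i xs - hs i \<bullet> (x - xs)"

lemma norm_add_sq: "(norm (a + b))\<^sup>2 = (norm a)\<^sup>2 + 2 * (b \<bullet> a) + (norm (b::'a))\<^sup>2"
  by (simp add: power2_norm_eq_inner inner_add_left inner_add_right inner_commute)

lemma L_nn: "i < n \<Longrightarrow> 0 \<le> L i"
  using L_nonneg[of "G i" "L i"] smooth by blast

lemma Lt_nn: "0 \<le> Lt"
proof -
  have "0 \<le> (\<Sum>i<n. (\<alpha> i)\<^sup>2 * L i)" by (intro sum_nonneg) (simp add: L_nn)
  then show ?thesis unfolding Lt_def by simp
qed

lemma Dl_nn: "0 \<le> Dl x"
  unfolding Dl_def using minim by simp

lemma phi_deriv: "i < n \<Longrightarrow> GDERIV (phi i) x :> gi i x"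
proof -
  assume i: "i < n"
  let ?T = "shiftT (\<alpha> i) (xm i)"
  have a: "(?T has_derivative (\<lambda>h. \<alpha> i *\<^sub>R h)) (at x)"
    unfolding shiftT_def by (auto intro!: derivative_eq_intros)
  have b: "(f i has_derivative (\<lambda>h. h \<bullet> G i (?T x))) (at (?T x))"
    using grad[OF i] by (simp add: gderiv_def)
  have "((\<lambda>x. f i (?T x)) has_derivative (\<lambda>h. (\<alpha> i *\<^sub>R h) \<bullet> G i (?T x))) (at x)"
    using has_derivative_compose[OF a b] by (simp add: o_def)
  then show ?thesis unfolding gderiv_def phi_def gi_def by simp
qed

lemma gi_lip: "i < n \<Longrightarrow> norm (gi i y - gi i z) \<le> ((\<alpha> i)\<^sup>2 * L i) * norm (y - z)"
proof -
  assume i: "i < n"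
  have a: "0 < \<alpha> i" using alpha[OF i] by simp
  have "norm (gi i y - gi i z) = \<alpha> i * norm (G i (shiftT (\<alpha> i) (xm i) y) - G i (shiftT (\<alpha> i) (xm i) z))"
    unfolding gi_def using a by (simp add: scaleR_diff_right[symmetric])
  also have "\<dots> \<le> \<alpha> i * (L i * norm (shiftT (\<alpha> i) (xm i) y - shiftT (\<alpha> i) (xm i) z))"
    using smooth[OF i] a by (intro mult_left_mono) auto
  also have "shiftT (\<alpha> i) (xm i) y - shiftT (\<alpha> i) (xm i) z = \<alpha> i *\<^sub>R (y - z)"
    unfolding shiftT_def by (simp add: algebra_simps)
  finally show ?thesis using a by (simp add: power2_eq_square mult_ac)
qed

lemma phi_gi: "i < n \<Longrightarrow> phi i x + gi i x \<bullet> (y - x) \<le> phi i y"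
proof -
  assume i: "i < n"
  have "f i (shiftT (\<alpha> i) (xm i) x) + G i (shiftT (\<alpha> i) (xm i) x) \<bullet> (shiftT (\<alpha> i) (xm i) y - shiftT (\<alpha> i) (xm i) x)
      \<le> f i (shiftT (\<alpha> i) (xm i) y)"
    by (rule gradient_ineq[OF convex[OF i] grad[OF i]])
  moreover have "shiftT (\<alpha> i) (xm i) y - shiftT (\<alpha> i) (xm i) x = \<alpha> i *\<^sub>R (y - x)"
    unfolding shiftT_def by (simp add: algebra_simps)
  ultimately show ?thesis unfolding phi_def gi_def by simp
qed

lemma Ft_phi: "Ft x = (1 / real n) * (\<Sum>i<n. phi i x)"
  unfolding ftilde_def phi_def ..

lemma Ft_deriv: "GDERIV Ft x :> gF x"
proof -
  have "GDERIV (\<lambda>x. \<Sum>i<n. phi i x) x :> (\<Sum>i<n. gi i x)"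
  proof -
    have e: "(\<lambda>h. h \<bullet> (\<Sum>i<n. gi i x)) = (\<lambda>h. \<Sum>i<n. h \<bullet> gi i x)"
      by (simp add: inner_sum_right)
    show ?thesis
      using phi_deriv unfolding gderiv_def e by (auto intro!: has_derivative_sum)
  qed
  then have "GDERIV (\<lambda>x. (1 / real n) * (\<Sum>i<n. phi i x)) x :> (1 / real n) *\<^sub>R (\<Sum>i<n. gi i x)"
    unfolding gderiv_def
  proof -
    assume h: "((\<lambda>x. \<Sum>i<n. phi i x) has_derivative (\<lambda>h. h \<bullet> (\<Sum>i<n. gi i x))) (at x)"
    have e: "(\<lambda>h. h \<bullet> ((1 / real n) *\<^sub>R (\<Sum>i<n. gi i x))) = (\<lambda>h. (1 / real n) * (h \<bullet> (\<Sum>i<n. gi i x)))"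
      by (simp add: inner_commute)
    show "((\<lambda>x. 1 / real n * (\<Sum>i<n. phi i x)) has_derivative (\<lambda>h. h \<bullet> ((1 / real n) *\<^sub>R (\<Sum>i<n. gi i x)))) (at x)"
      unfolding e by (rule has_derivative_mult_right[OF h])
  qed
  then show ?thesis unfolding gF_def Ft_phi[abs_def] by simp
qed

lemma gF_lip: "norm (gF y - gF z) \<le> Lt * norm (y - z)"
proof -
  have "gF y - gF z = (1 / real n) *\<^sub>R (\<Sum>i<n. gi i y - gi i z)"
    unfolding gF_def by (simp add: sum_subtractf scaleR_diff_right)
  then have "norm (gF y - gF z) = (1 / real n) * norm (\<Sum>i<n. gi i y - gi i z)" by simp
  also have "\<dots> \<le> (1 / real n) * (\<Sum>i<n. norm (gi i y - gi i z))"
    by (intro mult_left_mono norm_sum) auto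
  also have "\<dots> \<le> (1 / real n) * (\<Sum>i<n. ((\<alpha> i)\<^sup>2 * L i) * norm (y - z))"
    by (intro mult_left_mono sum_mono gi_lip) auto
  also have "\<dots> = Lt * norm (y - z)" unfolding Lt_def by (simp add: sum_distrib_right)
  finally show ?thesis .
qed

lemma Ft_gi: "Ft x + gF x \<bullet> (y - x) \<le> Ft y"
proof -
  have "(\<Sum>i<n. phi i x + gi i x \<bullet> (y - x)) \<le> (\<Sum>i<n. phi i y)"
    by (intro sum_mono phi_gi) auto
  then have "(1 / real n) * (\<Sum>i<n. phi i x + gi i x \<bullet> (y - x)) \<le> (1 / real n) * (\<Sum>i<n. phi i y)"
    by (intro mult_left_mono) auto
  then show ?thesis unfolding Ft_phi gF_def
    by (simp add: sum.distrib inner_sum_left distrib_left)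
qed

lemma gF_xs: "gF xs = 0"
  by (rule first_order[OF Ft_deriv minim])

lemma Ft_descent: "Ft y \<le> Ft x + gF x \<bullet> (y - x) + Lt / 2 * (norm (y - x))\<^sup>2"
  by (rule descent[OF Ft_deriv gF_lip])

lemma gF_sq: "(norm (gF x))\<^sup>2 \<le> 2 * Lt * Dl x"
  using cocoercive[OF Ft_deriv gF_lip Ft_gi, of x xs] unfolding gF_xs Dl_def by simp

lemma Di_nn: "i < n \<Longrightarrow> 0 \<le> Di i x"
  using phi_gi[of i xs x] unfolding Di_def hs_def by simp

lemma gi_sq: assumes i: "i < n" shows "(norm (gi i x - hs i))\<^sup>2 \<le> 2 * ((\<alpha> i)\<^sup>2 * L i) * Di i x"
  using cocoercive[OF phi_deriv[OF i] gi_lip[OF i] phi_gi[OF i], of x xs] unfolding Di_def hs_def by simp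

lemma Di_sum: "(1 / real n) * (\<Sum>i<n. Di i x) = Dl x"
proof -
  have "(\<Sum>i<n. hs i) = 0" using gF_xs n_pos unfolding gF_def hs_def by simp
  then have "(\<Sum>i<n. hs i \<bullet> (x - xs)) = 0" by (simp add: inner_sum_left[symmetric])
  then show ?thesis unfolding Di_def Dl_def Ft_phi
    by (simp add: sum_subtractf sum.distrib algebra_simps)
qed

lemma weighted_bound:
  assumes c: "\<And>i. i < n \<Longrightarrow> 0 \<le> c i"
  shows "(1 / real n) * (\<Sum>i<n. c i * (norm (gi i x - hs i))\<^sup>2)
           \<le> 2 * Max ((\<lambda>i. c i * ((\<alpha> i)\<^sup>2 * L i)) ` {..<n}) * Dl x"
proof -
  let ?m = "Max ((\<lambda>i. c i * ((\<alpha> i)\<^sup>2 * L i)) ` {..<n})"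
  have "(\<Sum>i<n. c i * (norm (gi i x - hs i))\<^sup>2) \<le> (\<Sum>i<n. c i * (2 * ((\<alpha> i)\<^sup>2 * L i) * Di i x))"
    by (intro sum_mono mult_left_mono gi_sq c) auto
  also have "\<dots> \<le> (\<Sum>i<n. 2 * ?m * Di i x)"
  proof (intro sum_mono)
    fix i assume "i \<in> {..<n}"
    then have i: "i < n" by simp
    have "c i * ((\<alpha> i)\<^sup>2 * L i) \<le> ?m" using i by (intro Max_ge) auto
    then show "c i * (2 * ((\<alpha> i)\<^sup>2 * L i) * Di i x) \<le> 2 * ?m * Di i x"
    proof -
      have "c i * (2 * ((\<alpha> i)\<^sup>2 * L i) * Di i x) = 2 * (c i * ((\<alpha> i)\<^sup>2 * L i)) * Di i x"
        by (simp add: mult_ac)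
      also have "\<dots> \<le> 2 * ?m * Di i x"
        using Di_nn[OF i, of x] \<open>c i * ((\<alpha> i)\<^sup>2 * L i) \<le> ?m\<close> by (intro mult_right_mono) auto
      finally show ?thesis .
    qed
  qed
  finally have "(1 / real n) * (\<Sum>i<n. c i * (norm (gi i x - hs i))\<^sup>2) \<le> (1 / real n) * (\<Sum>i<n. 2 * ?m * Di i x)"
    by (intro mult_left_mono) auto
  also have "\<dots> = 2 * ?m * ((1 / real n) * (\<Sum>i<n. Di i x))"
    by (simp add: sum_distrib_left[symmetric])
  finally show ?thesis unfolding Di_sum .
qed

end

locale detset2 = detset +
  fixes w \<beta> :: "nat \<Rightarrow> real" and \<gamma> :: real
  assumes w_nonneg: "\<And>i. i < n \<Longrightarrow> 0 \<le> w i"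
    and beta: "\<And>i. i < n \<Longrightarrow> 0 < \<beta> i \<and> \<beta> i \<le> 1 / (w i + 1)"
    and gamma_pos: "0 < \<gamma>"
    and gamma_le: "\<gamma> \<le> 1 / (4 * ((1 / real n) * (\<Sum>i<n. (\<alpha> i)\<^sup>2 * L i)
        + 2 * Max ((\<lambda>i. L i * (\<alpha> i)\<^sup>2 * w i) ` {..<n}) / real n
        + 4 * Max ((\<lambda>i. \<beta> i * w i * L i * (\<alpha> i)\<^sup>2) ` {..<n})
            / (real n * Min (\<beta> ` {..<n}))))"
begin

definition "bmin = Min (\<beta> ` {..<n})"
definition "Lm1 = Max ((\<lambda>i. L i * (\<alpha> i)\<^sup>2 * w i) ` {..<n})"
definition "Lm2 = Max ((\<lambda>i. \<beta> i * w i * L i * (\<alpha> i)\<^sup>2) ` {..<n})"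
definition "sig h = (1 / real n) * (\<Sum>i<n. w i * (norm (h i - hs i))\<^sup>2)"
definition "Mc = 4 / (real n * bmin)"
definition "Psi x h = (norm (x - xs))\<^sup>2 + Mc * \<gamma>\<^sup>2 * sig h"

lemma n_gt0: "0 < real n" using n_pos by simp

lemma bmin_pos: "0 < bmin"
proof -
  have "0 \<in> {..<n}" using n_pos by simp
  then have "bmin \<in> \<beta> ` {..<n}" unfolding bmin_def by (intro Min_in) auto
  then show ?thesis using beta by auto
qed

lemma bmin_le: "i < n \<Longrightarrow> bmin \<le> \<beta> i"
  unfolding bmin_def by (intro Min_le) auto

lemma Lm1_nn: "0 \<le> Lm1"
proof -
  have "L 0 * (\<alpha> 0)\<^sup>2 * w 0 \<le> Lm1" unfolding Lm1_def using n_pos by (intro Max_ge) auto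
  moreover have "0 \<le> L 0 * (\<alpha> 0)\<^sup>2 * w 0" using n_pos L_nn w_nonneg by simp
  ultimately show ?thesis by linarith
qed

lemma Lm2_nn: "0 \<le> Lm2"
proof -
  have "\<beta> 0 * w 0 * L 0 * (\<alpha> 0)\<^sup>2 \<le> Lm2" unfolding Lm2_def using n_pos by (intro Max_ge) auto
  moreover have "0 \<le> \<beta> 0 * w 0 * L 0 * (\<alpha> 0)\<^sup>2" using n_pos L_nn w_nonneg beta[of 0] by simp
  ultimately show ?thesis by linarith
qed

lemma sig_nn: "0 \<le> sig h"
proof -
  have "0 \<le> (\<Sum>i<n. w i * (norm (h i - hs i))\<^sup>2)" by (intro sum_nonneg) (simp add: w_nonneg)
  then show ?thesis unfolding sig_def by simp
qed

lemma Mc_pos: "0 < Mc" unfolding Mc_def using n_gt0 bmin_pos by simp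

lemma Psi_nn: "0 \<le> Psi x h"
  unfolding Psi_def using sig_nn Mc_pos by (auto intro!: add_nonneg_nonneg mult_nonneg_nonneg)

lemma gamma_sum: "4 * \<gamma> * (Lt + 2 * Lm1 / real n + 4 * Lm2 / (real n * bmin)) \<le> 1"
proof -
  let ?S = "Lt + 2 * Lm1 / real n + 4 * Lm2 / (real n * bmin)"
  have S0: "0 \<le> ?S" using Lt_nn Lm1_nn Lm2_nn n_gt0 bmin_pos by simp
  have g: "\<gamma> \<le> 1 / (4 * ?S)"
    using gamma_le unfolding Lt_def Lm1_def Lm2_def bmin_def by simp
  show ?thesis
  proof (cases "?S = 0")
    case True then show ?thesis by simp
  next
    case False
    then have "0 < 4 * ?S" using S0 by simp
    then show ?thesis using g by (simp add: field_simps)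
  qed
qed

lemma Lm1_alt: "Max ((\<lambda>i. w i * ((\<alpha> i)\<^sup>2 * L i)) ` {..<n}) = Lm1"
  unfolding Lm1_def by (rule arg_cong[where f=Max], rule image_cong) (auto simp: mult_ac)

lemma Lm2_alt: "Max ((\<lambda>i. (w i * \<beta> i) * ((\<alpha> i)\<^sup>2 * L i)) ` {..<n}) = Lm2"
  unfolding Lm2_def by (rule arg_cong[where f=Max], rule image_cong) (auto simp: mult_ac)

lemma det_ineq:
  fixes x :: 'a and h :: "nat \<Rightarrow> 'a"
  defines "v \<equiv> \<lambda>i. gi i x - h i"
  defines "c \<equiv> 1 + Lt * \<gamma> / 2"
  shows "- 2 * \<gamma> * ((x - xs) \<bullet> gF x)
         + c * \<gamma>\<^sup>2 * ((norm (gF x))\<^sup>2 + (1 / (real n)\<^sup>2) * (\<Sum>i<n. w i * (norm (v i))\<^sup>2))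
         + \<gamma> * Dl x - \<gamma>\<^sup>2 * (norm (gF x))\<^sup>2
         + Mc * \<gamma>\<^sup>2 * ((1 / real n) * (\<Sum>i<n. w i * (2 * \<beta> i * ((h i - hs i) \<bullet> v i)
                 + (\<beta> i)\<^sup>2 * (1 + w i) * (norm (v i))\<^sup>2))) \<le> 0"
proof -
  define D where "D = Dl x"
  define \<sigma> where "\<sigma> = sig h"
  define S1 where "S1 = (1 / real n) * (\<Sum>i<n. w i * (norm (gi i x - hs i))\<^sup>2)"
  define S2 where "S2 = (1 / real n) * (\<Sum>i<n. (w i * \<beta> i) * (norm (gi i x - hs i))\<^sup>2)"
  define Sb where "Sb = (1 / real n) * (\<Sum>i<n. (w i * \<beta> i) * (norm (h i - hs i))\<^sup>2)"
  have D0: "0 \<le> D" unfolding D_def by (rule Dl_nn)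
  have s0: "0 \<le> \<sigma>" unfolding \<sigma>_def by (rule sig_nn)
  have i1: "D \<le> (x - xs) \<bullet> gF x"
  proof -
    have "gF x \<bullet> (xs - x) = - ((x - xs) \<bullet> gF x)" by (simp add: inner_diff_left inner_diff_right inner_commute)
    then show ?thesis using Ft_gi[of x xs] unfolding D_def Dl_def by linarith
  qed
  have i2: "(norm (gF x))\<^sup>2 \<le> 2 * Lt * D" unfolding D_def by (rule gF_sq)
  have i3: "S1 \<le> 2 * Lm1 * D"
    using weighted_bound[of w x] w_nonneg unfolding S1_def D_def Lm1_alt by simp
  have i4: "S2 \<le> 2 * Lm2 * D"
  proof -
    have "0 \<le> w i * \<beta> i" if "i < n" for i using w_nonneg[OF that] beta[OF that] by simp
    then show ?thesis using weighted_bound[of "\<lambda>i. w i * \<beta> i" x] unfolding S2_def D_def Lm2_alt by simp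
  qed
  have i5: "bmin * \<sigma> \<le> Sb"
  proof -
    have "(\<Sum>i<n. bmin * (w i * (norm (h i - hs i))\<^sup>2)) \<le> (\<Sum>i<n. (w i * \<beta> i) * (norm (h i - hs i))\<^sup>2)"
    proof (intro sum_mono)
      fix i assume "i \<in> {..<n}"
      then have i: "i < n" by simp
      have "bmin * (w i * (norm (h i - hs i))\<^sup>2) = (w i * (norm (h i - hs i))\<^sup>2) * bmin" by simp
      also have "\<dots> \<le> (w i * (norm (h i - hs i))\<^sup>2) * \<beta> i"
        using bmin_le[OF i] w_nonneg[OF i] by (intro mult_left_mono) auto
      finally show "bmin * (w i * (norm (h i - hs i))\<^sup>2) \<le> (w i * \<beta> i) * (norm (h i - hs i))\<^sup>2"
        by (simp add: mult_ac)
    qed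
    then show ?thesis unfolding Sb_def \<sigma>_def sig_def using n_gt0
      by (simp add: sum_distrib_left[symmetric] divide_right_mono)
  qed
  have i6: "(1 / (real n)\<^sup>2) * (\<Sum>i<n. w i * (norm (v i))\<^sup>2) \<le> (2 / real n) * (S1 + \<sigma>)"
  proof -
    have "(\<Sum>i<n. w i * (norm (v i))\<^sup>2) \<le> (\<Sum>i<n. 2 * (w i * (norm (gi i x - hs i))\<^sup>2) + 2 * (w i * (norm (h i - hs i))\<^sup>2))"
    proof (intro sum_mono)
      fix i assume "i \<in> {..<n}"
      then have i: "i < n" by simp
      have "v i = (gi i x - hs i) - (h i - hs i)" unfolding v_def by simp
      then have "norm (v i) \<le> norm (gi i x - hs i) + norm (h i - hs i)"
        by (metis norm_triangle_ineq4)
      then have "(norm (v i))\<^sup>2 \<le> (norm (gi i x - hs i) + norm (h i - hs i))\<^sup>2"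
        by (simp add: power_mono)
      also have "\<dots> \<le> 2 * (norm (gi i x - hs i))\<^sup>2 + 2 * (norm (h i - hs i))\<^sup>2"
      proof -
        have "0 \<le> (norm (gi i x - hs i) - norm (h i - hs i))\<^sup>2" by simp
        then show ?thesis unfolding power2_diff power2_sum by linarith
      qed
      finally show "w i * (norm (v i))\<^sup>2 \<le> 2 * (w i * (norm (gi i x - hs i))\<^sup>2) + 2 * (w i * (norm (h i - hs i))\<^sup>2)"
        using w_nonneg[OF i] by (metis (no_types, opaque_lifting) distrib_left mult.left_commute mult_left_mono)
    qed
    then have "(1 / (real n)\<^sup>2) * (\<Sum>i<n. w i * (norm (v i))\<^sup>2) \<le> (1 / (real n)\<^sup>2) * (2 * (\<Sum>i<n. w i * (norm (gi i x - hs i))\<^sup>2) + 2 * (\<Sum>i<n. w i * (norm (h i - hs i))\<^sup>2))"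
      by (intro mult_left_mono) (auto simp: sum.distrib sum_distrib_left)
    also have "\<dots> = (2 / real n) * (S1 + \<sigma>)"
      unfolding S1_def \<sigma>_def sig_def using n_gt0 by (simp add: field_simps power2_eq_square)
    finally show ?thesis .
  qed
  have i7: "(1 / real n) * (\<Sum>i<n. w i * (2 * \<beta> i * ((h i - hs i) \<bullet> v i) + (\<beta> i)\<^sup>2 * (1 + w i) * (norm (v i))\<^sup>2))
      \<le> S2 - Sb"
  proof -
    have "(\<Sum>i<n. w i * (2 * \<beta> i * ((h i - hs i) \<bullet> v i) + (\<beta> i)\<^sup>2 * (1 + w i) * (norm (v i))\<^sup>2))
        \<le> (\<Sum>i<n. (w i * \<beta> i) * (norm (gi i x - hs i))\<^sup>2 - (w i * \<beta> i) * (norm (h i - hs i))\<^sup>2)"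
    proof (intro sum_mono)
      fix i assume "i \<in> {..<n}"
      then have i: "i < n" by simp
      have b: "0 < \<beta> i" "\<beta> i * (1 + w i) \<le> 1"
        using beta[OF i] w_nonneg[OF i] by (auto simp: field_simps)
      have "(\<beta> i)\<^sup>2 * (1 + w i) * (norm (v i))\<^sup>2 \<le> \<beta> i * (norm (v i))\<^sup>2"
      proof -
        have "(\<beta> i)\<^sup>2 * (1 + w i) = \<beta> i * (\<beta> i * (1 + w i))" by (simp add: power2_eq_square)
        also have "\<dots> \<le> \<beta> i" using b by (simp add: mult_left_le)
        finally show ?thesis by (intro mult_right_mono) auto
      qed
      then have "w i * (2 * \<beta> i * ((h i - hs i) \<bullet> v i) + (\<beta> i)\<^sup>2 * (1 + w i) * (norm (v i))\<^sup>2)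
          \<le> w i * (\<beta> i * (2 * ((h i - hs i) \<bullet> v i) + (norm (v i))\<^sup>2))"
        using w_nonneg[OF i] by (intro mult_left_mono) (auto simp: algebra_simps)
      also have "2 * ((h i - hs i) \<bullet> v i) + (norm (v i))\<^sup>2 = (norm (gi i x - hs i))\<^sup>2 - (norm (h i - hs i))\<^sup>2"
      proof -
        have "gi i x - hs i = v i + (h i - hs i)" unfolding v_def by simp
        then have "(norm (gi i x - hs i))\<^sup>2 = (norm (v i))\<^sup>2 + 2 * ((h i - hs i) \<bullet> v i) + (norm (h i - hs i))\<^sup>2"
          using norm_add_sq[of "v i" "h i - hs i"] by (simp only:)
        then show ?thesis by simp
      qed
      finally show "w i * (2 * \<beta> i * ((h i - hs i) \<bullet> v i) + (\<beta> i)\<^sup>2 * (1 + w i) * (norm (v i))\<^sup>2)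
          \<le> (w i * \<beta> i) * (norm (gi i x - hs i))\<^sup>2 - (w i * \<beta> i) * (norm (h i - hs i))\<^sup>2"
        by (simp add: algebra_simps)
    qed
    then show ?thesis unfolding S2_def Sb_def using n_gt0
      by (simp add: sum_subtractf divide_right_mono diff_divide_distrib[symmetric])
  qed
  define B1 where "B1 = \<gamma> * Lt"
  define B2 where "B2 = 2 * \<gamma> * Lm1 / real n"
  define B3 where "B3 = 4 * \<gamma> * Lm2 / (real n * bmin)"
  have B1: "0 \<le> B1" unfolding B1_def using gamma_pos Lt_nn by simp
  have B2: "0 \<le> B2" unfolding B2_def using gamma_pos Lm1_nn n_gt0 by simp
  have B3: "0 \<le> B3" unfolding B3_def using gamma_pos Lm2_nn n_gt0 bmin_pos by simp
  have Bs: "B1 + B2 + B3 \<le> 1 / 4"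
    using gamma_sum unfolding B1_def B2_def B3_def by (simp add: field_simps)
  have c: "c = 1 + B1 / 2" unfolding c_def B1_def by (simp add: mult.commute)
  have cle: "c \<le> 9 / 8" "1 \<le> c" using c Bs B1 B2 B3 by auto
  have g: "0 < \<gamma>" by (rule gamma_pos)
  have t1: "- 2 * \<gamma> * ((x - xs) \<bullet> gF x) \<le> - 2 * \<gamma> * D" using i1 g by simp
  have t2: "(c - 1) * \<gamma>\<^sup>2 * (norm (gF x))\<^sup>2 \<le> B1\<^sup>2 * \<gamma> * D"
  proof -
    have "(c - 1) * \<gamma>\<^sup>2 * (norm (gF x))\<^sup>2 \<le> (c - 1) * \<gamma>\<^sup>2 * (2 * Lt * D)"
      using i2 cle g by (intro mult_left_mono) auto
    also have "\<dots> = B1\<^sup>2 * \<gamma> * D" unfolding c B1_def by (simp add: power2_eq_square)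
    finally show ?thesis .
  qed
  have t3: "c * \<gamma>\<^sup>2 * ((1 / (real n)\<^sup>2) * (\<Sum>i<n. w i * (norm (v i))\<^sup>2)) \<le> c * \<gamma>\<^sup>2 * ((2 / real n) * (2 * Lm1 * D + \<sigma>))"
  proof -
    have "(2 / real n) * (S1 + \<sigma>) \<le> (2 / real n) * (2 * Lm1 * D + \<sigma>)"
      using i3 n_gt0 by (intro mult_left_mono) auto
    then show ?thesis using i6 cle g by (intro mult_left_mono) auto
  qed
  have t3': "c * \<gamma>\<^sup>2 * ((2 / real n) * (2 * Lm1 * D + \<sigma>)) = 2 * c * B2 * \<gamma> * D + 2 * c * \<gamma>\<^sup>2 * \<sigma> / real n"
    unfolding B2_def using n_gt0 by (simp add: field_simps power2_eq_square)
  have t4: "Mc * \<gamma>\<^sup>2 * ((1 / real n) * (\<Sum>i<n. w i * (2 * \<beta> i * ((h i - hs i) \<bullet> v i) + (\<beta> i)\<^sup>2 * (1 + w i) * (norm (v i))\<^sup>2)))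
      \<le> Mc * \<gamma>\<^sup>2 * (2 * Lm2 * D - bmin * \<sigma>)"
    using i7 i4 i5 Mc_pos g by (intro mult_left_mono) auto
  have t4': "Mc * \<gamma>\<^sup>2 * (2 * Lm2 * D - bmin * \<sigma>) = 2 * B3 * \<gamma> * D - 4 * \<gamma>\<^sup>2 * \<sigma> / real n"
    unfolding Mc_def B3_def using n_gt0 bmin_pos by (simp add: field_simps power2_eq_square)
  have key: "- 2 * \<gamma> * D + B1\<^sup>2 * \<gamma> * D + (2 * c * B2 * \<gamma> * D + 2 * c * \<gamma>\<^sup>2 * \<sigma> / real n) + \<gamma> * D
       + (2 * B3 * \<gamma> * D - 4 * \<gamma>\<^sup>2 * \<sigma> / real n) \<le> 0"
  proof -
    have "B1\<^sup>2 \<le> (1 / 4)\<^sup>2" using B1 B2 B3 Bs by (intro power_mono) auto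
    moreover have "(2 * c) * B2 \<le> 9 / 4 * B2" using cle B2 by (intro mult_right_mono) auto
    ultimately have "- 1 + B1\<^sup>2 + 2 * c * B2 + 2 * B3 \<le> 0"
      using B1 B2 B3 Bs by (simp add: power2_eq_square)
    then have a: "(- 1 + B1\<^sup>2 + 2 * c * B2 + 2 * B3) * (\<gamma> * D) \<le> 0"
      using g D0 by (intro mult_nonpos_nonneg) auto
    have b0: "(2 * c) * (\<gamma>\<^sup>2 * \<sigma> / real n) \<le> 4 * (\<gamma>\<^sup>2 * \<sigma> / real n)"
      using cle g s0 n_gt0 by (intro mult_right_mono) auto
    have b: "2 * c * \<gamma>\<^sup>2 * \<sigma> / real n \<le> 4 * \<gamma>\<^sup>2 * \<sigma> / real n"
      using b0 by (simp add: mult_ac)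
    show ?thesis using a b by (simp add: algebra_simps)
  qed
  show ?thesis
    using t1 t2 t3 t3' t4 t4' key unfolding D_def[symmetric]
    by (simp add: algebra_simps)
qed

end

context detset2 begin

lemma one_step:
  fixes N :: "'m measure" and Z :: "nat \<Rightarrow> 'm \<Rightarrow> 'a" and x :: 'a and h :: "nat \<Rightarrow> 'a"
  assumes PN: "prob_space N"
    and Zint: "\<And>i. i < n \<Longrightarrow> integrable N (Z i)"
    and Zmean: "\<And>i. i < n \<Longrightarrow> (\<integral>\<omega>. Z i \<omega> \<partial>N) = gi i x - h i"
    and Zvar: "\<And>i. i < n \<Longrightarrow> integrable N (\<lambda>\<omega>. (norm (Z i \<omega> - (gi i x - h i)))\<^sup>2) \<and>
                 (\<integral>\<omega>. (norm (Z i \<omega> - (gi i x - h i)))\<^sup>2 \<partial>N) \<le> w i * (norm (gi i x - h i))\<^sup>2"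
    and Zcross: "\<And>i j. i < n \<Longrightarrow> j < n \<Longrightarrow> i \<noteq> j \<Longrightarrow>
                 integrable N (\<lambda>\<omega>. (Z i \<omega> - (gi i x - h i)) \<bullet> (Z j \<omega> - (gi j x - h j))) \<and>
                 (\<integral>\<omega>. (Z i \<omega> - (gi i x - h i)) \<bullet> (Z j \<omega> - (gi j x - h j)) \<partial>N) = 0"
  shows "(\<integral>\<^sup>+\<omega>. ennreal (Psi (x - \<gamma> *\<^sub>R ((1 / real n) *\<^sub>R (\<Sum>i<n. h i + Z i \<omega>)))
                              (\<lambda>i. h i + \<beta> i *\<^sub>R Z i \<omega>)
                       + \<gamma> * Dl (x - \<gamma> *\<^sub>R ((1 / real n) *\<^sub>R (\<Sum>i<n. h i + Z i \<omega>)))) \<partial>N)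
         \<le> ennreal (Psi x h)"
proof -
  interpret N: prob_space N by (rule PN)
  define v where "v i = gi i x - h i" for i
  define d where "d i \<omega> = Z i \<omega> - v i" for i \<omega>
  define gh where "gh \<omega> = (1 / real n) *\<^sub>R (\<Sum>i<n. h i + Z i \<omega>)" for \<omega>
  define e where "e \<omega> = (1 / real n) *\<^sub>R (\<Sum>i<n. d i \<omega>)" for \<omega>
  define c where "c = 1 + Lt * \<gamma> / 2"
  have gh_e: "gh \<omega> = gF x + e \<omega>" for \<omega>
    unfolding gh_def e_def gF_def d_def v_def by (simp add: sum.distrib sum_subtractf scaleR_diff_right algebra_simps)
  have dint: "i < n \<Longrightarrow> integrable N (d i)" for i unfolding d_def using Zint by auto
  have dmean: "i < n \<Longrightarrow> (\<integral>\<omega>. d i \<omega> \<partial>N) = 0" for i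
    unfolding d_def using Zint Zmean v_def by (simp add: Bochner_Integration.integral_diff N.prob_space)
  have eint: "integrable N e" unfolding e_def
    by (intro integrable_scaleR_right Bochner_Integration.integrable_sum dint) auto
  have emean: "(\<integral>\<omega>. e \<omega> \<partial>N) = 0" unfolding e_def using dint dmean
    by (simp add: Bochner_Integration.integral_sum)
  have ghint: "integrable N gh" unfolding gh_e using eint by auto
  have ghmean: "(\<integral>\<omega>. gh \<omega> \<partial>N) = gF x" unfolding gh_e using eint emean
    by (simp add: N.prob_space)
  have ddint: "i < n \<Longrightarrow> j < n \<Longrightarrow> integrable N (\<lambda>\<omega>. d i \<omega> \<bullet> d j \<omega>)" for i j
    using Zvar Zcross unfolding d_def v_def by (cases "i = j") (auto simp: power2_norm_eq_inner)
  have ddmean: "i < n \<Longrightarrow> j < n \<Longrightarrow> (\<integral>\<omega>. d i \<omega> \<bullet> d j \<omega> \<partial>N) = (if i = j then (\<integral>\<omega>. (norm (d i \<omega>))\<^sup>2 \<partial>N) else 0)" for i j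
    using Zcross unfolding d_def v_def by (cases "i = j") (auto simp: power2_norm_eq_inner)
  have e_sq: "(norm (e \<omega>))\<^sup>2 = (1 / (real n)\<^sup>2) * (\<Sum>i<n. \<Sum>j<n. d i \<omega> \<bullet> d j \<omega>)" for \<omega>
  proof -
    have "e \<omega> \<bullet> e \<omega> = (1 / real n) * (1 / real n) * (\<Sum>i<n. \<Sum>j<n. d i \<omega> \<bullet> d j \<omega>)"
      unfolding e_def by (simp add: inner_sum_left inner_sum_right sum_distrib_left inner_commute)
    then show ?thesis unfolding power2_norm_eq_inner by (simp add: power2_eq_square)
  qed
  have esqint: "integrable N (\<lambda>\<omega>. (norm (e \<omega>))\<^sup>2)"
    unfolding e_sq by (intro integrable_mult_right Bochner_Integration.integrable_sum ddint) auto
  have esqmean: "(\<integral>\<omega>. (norm (e \<omega>))\<^sup>2 \<partial>N) \<le> (1 / (real n)\<^sup>2) * (\<Sum>i<n. w i * (norm (v i))\<^sup>2)"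
  proof -
    have s1: "(\<integral>\<omega>. (\<Sum>i<n. \<Sum>j<n. d i \<omega> \<bullet> d j \<omega>) \<partial>N) = (\<Sum>i<n. (\<integral>\<omega>. (\<Sum>j<n. d i \<omega> \<bullet> d j \<omega>) \<partial>N))"
      by (rule Bochner_Integration.integral_sum) (intro Bochner_Integration.integrable_sum ddint, auto)
    have s2: "\<dots> = (\<Sum>i<n. \<Sum>j<n. (\<integral>\<omega>. d i \<omega> \<bullet> d j \<omega> \<partial>N))"
      by (intro sum.cong refl Bochner_Integration.integral_sum ddint) auto
    have "(\<integral>\<omega>. (norm (e \<omega>))\<^sup>2 \<partial>N) = (1 / (real n)\<^sup>2) * (\<Sum>i<n. \<Sum>j<n. (\<integral>\<omega>. d i \<omega> \<bullet> d j \<omega> \<partial>N))"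
      unfolding e_sq integral_mult_right_zero s1 s2 ..
    also have "\<dots> = (1 / (real n)\<^sup>2) * (\<Sum>i<n. (\<integral>\<omega>. (norm (d i \<omega>))\<^sup>2 \<partial>N))"
    proof -
      have "(\<Sum>j<n. (\<integral>\<omega>. d i \<omega> \<bullet> d j \<omega> \<partial>N)) = (\<integral>\<omega>. (norm (d i \<omega>))\<^sup>2 \<partial>N)" if i: "i < n" for i
      proof -
        have "(\<Sum>j<n. (\<integral>\<omega>. d i \<omega> \<bullet> d j \<omega> \<partial>N)) = (\<Sum>j<n. if i = j then (\<integral>\<omega>. (norm (d i \<omega>))\<^sup>2 \<partial>N) else 0)"
          using ddmean i by (intro sum.cong refl) auto
        also have "\<dots> = (\<integral>\<omega>. (norm (d i \<omega>))\<^sup>2 \<partial>N)" using i by (simp add: sum.delta sum.delta')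
        finally show ?thesis .
      qed
      then show ?thesis by simp
    qed
    also have "\<dots> \<le> (1 / (real n)\<^sup>2) * (\<Sum>i<n. w i * (norm (v i))\<^sup>2)"
      using Zvar unfolding d_def v_def by (intro mult_left_mono sum_mono) auto
    finally show ?thesis .
  qed
  have ghsq: "(norm (gh \<omega>))\<^sup>2 = (norm (gF x))\<^sup>2 + 2 * (e \<omega> \<bullet> gF x) + (norm (e \<omega>))\<^sup>2" for \<omega>
    unfolding gh_e by (rule norm_add_sq)
  have ghsqint: "integrable N (\<lambda>\<omega>. (norm (gh \<omega>))\<^sup>2)"
    unfolding ghsq using esqint eint by auto
  have ghsqmean: "(\<integral>\<omega>. (norm (gh \<omega>))\<^sup>2 \<partial>N) \<le> (norm (gF x))\<^sup>2 + (1 / (real n)\<^sup>2) * (\<Sum>i<n. w i * (norm (v i))\<^sup>2)"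
    unfolding ghsq using esqint eint emean esqmean by (simp add: N.prob_space)
  have Zsq: "(norm (Z i \<omega>))\<^sup>2 = (norm (d i \<omega>))\<^sup>2 + 2 * (v i \<bullet> d i \<omega>) + (norm (v i))\<^sup>2" for i \<omega>
  proof -
    have "Z i \<omega> = d i \<omega> + v i" unfolding d_def by simp
    then show ?thesis using norm_add_sq[of "d i \<omega>" "v i"] by (simp only:)
  qed
  have Zsqint: "i < n \<Longrightarrow> integrable N (\<lambda>\<omega>. (norm (Z i \<omega>))\<^sup>2)" for i
    unfolding Zsq using Zvar dint unfolding d_def v_def by auto
  have Zsqmean: "i < n \<Longrightarrow> (\<integral>\<omega>. (norm (Z i \<omega>))\<^sup>2 \<partial>N) \<le> (1 + w i) * (norm (v i))\<^sup>2" for i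
  proof -
    assume i: "i < n"
    have dv: "integrable N (\<lambda>\<omega>. (norm (d i \<omega>))\<^sup>2)" "(\<integral>\<omega>. (norm (d i \<omega>))\<^sup>2 \<partial>N) \<le> w i * (norm (v i))\<^sup>2"
      using Zvar[OF i] unfolding d_def v_def by auto
    have a: "integrable N (\<lambda>\<omega>. 2 * (v i \<bullet> d i \<omega>))" using dint[OF i] by auto
    have "(\<integral>\<omega>. (norm (d i \<omega>))\<^sup>2 + 2 * (v i \<bullet> d i \<omega>) + (norm (v i))\<^sup>2 \<partial>N)
        = (\<integral>\<omega>. (norm (d i \<omega>))\<^sup>2 \<partial>N) + (\<integral>\<omega>. 2 * (v i \<bullet> d i \<omega>) \<partial>N) + (norm (v i))\<^sup>2"
      using dv(1) a by (simp add: N.prob_space)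
    also have "(\<integral>\<omega>. 2 * (v i \<bullet> d i \<omega>) \<partial>N) = 0" using dint[OF i] dmean[OF i] by simp
    finally show ?thesis unfolding Zsq using dv(2) by (simp add: algebra_simps)
  qed
  define P4 where "P4 \<omega> = (\<Sum>i<n. w i * (2 * \<beta> i * ((h i - hs i) \<bullet> Z i \<omega>) + (\<beta> i)\<^sup>2 * (norm (Z i \<omega>))\<^sup>2))" for \<omega>
  have P4int: "integrable N P4" unfolding P4_def
    by (intro Bochner_Integration.integrable_sum integrable_mult_right Bochner_Integration.integrable_add
        Zsqint integrable_inner_right Zint) auto
  have P4mean: "(\<integral>\<omega>. P4 \<omega> \<partial>N) \<le> (\<Sum>i<n. w i * (2 * \<beta> i * ((h i - hs i) \<bullet> v i) + (\<beta> i)\<^sup>2 * (1 + w i) * (norm (v i))\<^sup>2))"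
  proof -
    have "(\<integral>\<omega>. P4 \<omega> \<partial>N) = (\<Sum>i<n. (\<integral>\<omega>. w i * (2 * \<beta> i * ((h i - hs i) \<bullet> Z i \<omega>) + (\<beta> i)\<^sup>2 * (norm (Z i \<omega>))\<^sup>2) \<partial>N))"
      unfolding P4_def
      by (intro Bochner_Integration.integral_sum integrable_mult_right Bochner_Integration.integrable_add
        Zsqint integrable_inner_right Zint) auto
    also have "\<dots> \<le> (\<Sum>i<n. w i * (2 * \<beta> i * ((h i - hs i) \<bullet> v i) + (\<beta> i)\<^sup>2 * (1 + w i) * (norm (v i))\<^sup>2))"
    proof (intro sum_mono)
      fix i assume "i \<in> {..<n}"
      then have i: "i < n" by simp
      have "(\<integral>\<omega>. w i * (2 * \<beta> i * ((h i - hs i) \<bullet> Z i \<omega>) + (\<beta> i)\<^sup>2 * (norm (Z i \<omega>))\<^sup>2) \<partial>N)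
          = w i * (2 * \<beta> i * ((h i - hs i) \<bullet> v i) + (\<beta> i)\<^sup>2 * (\<integral>\<omega>. (norm (Z i \<omega>))\<^sup>2 \<partial>N))"
        using Zint[OF i] Zsqint[OF i] Zmean[OF i] unfolding v_def by simp
      also have "\<dots> \<le> w i * (2 * \<beta> i * ((h i - hs i) \<bullet> v i) + (\<beta> i)\<^sup>2 * ((1 + w i) * (norm (v i))\<^sup>2))"
        using Zsqmean[OF i] w_nonneg[OF i] by (intro mult_left_mono add_left_mono) auto
      finally show "(\<integral>\<omega>. w i * (2 * \<beta> i * ((h i - hs i) \<bullet> Z i \<omega>) + (\<beta> i)\<^sup>2 * (norm (Z i \<omega>))\<^sup>2) \<partial>N)
          \<le> w i * (2 * \<beta> i * ((h i - hs i) \<bullet> v i) + (\<beta> i)\<^sup>2 * (1 + w i) * (norm (v i))\<^sup>2)"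
        by (simp add: mult_ac)
    qed
    finally show ?thesis .
  qed
  define U where "U \<omega> = (Psi x h + \<gamma> * Dl x) + (- 2 * \<gamma>) * ((x - xs) \<bullet> gh \<omega>) + (c * \<gamma>\<^sup>2) * (norm (gh \<omega>))\<^sup>2
      + (- \<gamma>\<^sup>2) * (gF x \<bullet> gh \<omega>) + (Mc * \<gamma>\<^sup>2 / real n) * P4 \<omega>" for \<omega>
  have Uint: "integrable N U" unfolding U_def
    by (intro Bochner_Integration.integrable_add integrable_mult_right integrable_inner_right ghint ghsqint P4int
        N.integrable_const)
  have Umean: "(\<integral>\<omega>. U \<omega> \<partial>N) = (Psi x h + \<gamma> * Dl x) + (- 2 * \<gamma>) * ((x - xs) \<bullet> gF x)
      + (c * \<gamma>\<^sup>2) * (\<integral>\<omega>. (norm (gh \<omega>))\<^sup>2 \<partial>N) + (- \<gamma>\<^sup>2) * (gF x \<bullet> gF x) + (Mc * \<gamma>\<^sup>2 / real n) * (\<integral>\<omega>. P4 \<omega> \<partial>N)"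
    unfolding U_def using ghint ghsqint P4int ghmean
    by (simp add: N.prob_space Bochner_Integration.integral_add integrable_mult_right integrable_inner_right)
  have c0: "0 \<le> c" unfolding c_def using Lt_nn gamma_pos by simp
  have Ule: "(\<integral>\<omega>. U \<omega> \<partial>N) \<le> Psi x h"
  proof -
    have "(\<integral>\<omega>. U \<omega> \<partial>N) \<le> (Psi x h + \<gamma> * Dl x) + (- 2 * \<gamma>) * ((x - xs) \<bullet> gF x)
      + (c * \<gamma>\<^sup>2) * ((norm (gF x))\<^sup>2 + (1 / (real n)\<^sup>2) * (\<Sum>i<n. w i * (norm (v i))\<^sup>2)) + (- \<gamma>\<^sup>2) * (norm (gF x))\<^sup>2
      + (Mc * \<gamma>\<^sup>2 / real n) * (\<Sum>i<n. w i * (2 * \<beta> i * ((h i - hs i) \<bullet> v i) + (\<beta> i)\<^sup>2 * (1 + w i) * (norm (v i))\<^sup>2))"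
      unfolding Umean power2_norm_eq_inner[symmetric]
      using ghsqmean P4mean c0 Mc_pos n_gt0
      by (intro add_mono mult_left_mono order_refl) auto
    also have "\<dots> \<le> Psi x h"
      using det_ineq[of x h] unfolding v_def c_def by (simp add: algebra_simps)
    finally show ?thesis .
  qed
  have pw: "Psi (x - \<gamma> *\<^sub>R gh \<omega>) (\<lambda>i. h i + \<beta> i *\<^sub>R Z i \<omega>) + \<gamma> * Dl (x - \<gamma> *\<^sub>R gh \<omega>) \<le> U \<omega>" for \<omega>
  proof -
    have n1: "(norm (x - \<gamma> *\<^sub>R gh \<omega> - xs))\<^sup>2 = (norm (x - xs))\<^sup>2 - 2 * \<gamma> * ((x - xs) \<bullet> gh \<omega>) + \<gamma>\<^sup>2 * (norm (gh \<omega>))\<^sup>2"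
    proof -
      have e: "x - \<gamma> *\<^sub>R gh \<omega> - xs = (x - xs) + (- \<gamma> *\<^sub>R gh \<omega>)" by simp
      have "(norm ((x - xs) + (- \<gamma> *\<^sub>R gh \<omega>)))\<^sup>2 = (norm (x - xs))\<^sup>2 - 2 * \<gamma> * ((x - xs) \<bullet> gh \<omega>) + \<gamma>\<^sup>2 * (norm (gh \<omega>))\<^sup>2"
        unfolding norm_add_sq by (simp add: power_mult_distrib inner_commute)
      then show ?thesis unfolding e .
    qed
    have n2: "Dl (x - \<gamma> *\<^sub>R gh \<omega>) \<le> Dl x - \<gamma> * (gF x \<bullet> gh \<omega>) + Lt / 2 * \<gamma>\<^sup>2 * (norm (gh \<omega>))\<^sup>2"
      using Ft_descent[of "x - \<gamma> *\<^sub>R gh \<omega>" x] gamma_pos unfolding Dl_def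
      by (simp add: power_mult_distrib)
    have n3: "sig (\<lambda>i. h i + \<beta> i *\<^sub>R Z i \<omega>) = sig h + (1 / real n) * P4 \<omega>"
    proof -
      have "w i * (norm (h i + \<beta> i *\<^sub>R Z i \<omega> - hs i))\<^sup>2
          = w i * (norm (h i - hs i))\<^sup>2 + w i * (2 * \<beta> i * ((h i - hs i) \<bullet> Z i \<omega>) + (\<beta> i)\<^sup>2 * (norm (Z i \<omega>))\<^sup>2)" for i
      proof -
        have e: "h i + \<beta> i *\<^sub>R Z i \<omega> - hs i = (h i - hs i) + \<beta> i *\<^sub>R Z i \<omega>" by simp
        have q: "(norm (h i + \<beta> i *\<^sub>R Z i \<omega> - hs i))\<^sup>2 = (norm (h i - hs i))\<^sup>2 + (2 * \<beta> i * ((h i - hs i) \<bullet> Z i \<omega>) + (\<beta> i)\<^sup>2 * (norm (Z i \<omega>))\<^sup>2)"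
          unfolding e norm_add_sq by (simp add: power_mult_distrib inner_commute mult.assoc)
        show ?thesis unfolding q by (simp only: distrib_left)
      qed
      then have "(\<Sum>i<n. w i * (norm (h i + \<beta> i *\<^sub>R Z i \<omega> - hs i))\<^sup>2) = (\<Sum>i<n. w i * (norm (h i - hs i))\<^sup>2) + P4 \<omega>"
        unfolding P4_def by (simp only: sum.distrib)
      then show ?thesis unfolding sig_def by (simp only: distrib_left)
    qed
    have "Psi (x - \<gamma> *\<^sub>R gh \<omega>) (\<lambda>i. h i + \<beta> i *\<^sub>R Z i \<omega>) + \<gamma> * Dl (x - \<gamma> *\<^sub>R gh \<omega>)
       \<le> Psi (x - \<gamma> *\<^sub>R gh \<omega>) (\<lambda>i. h i + \<beta> i *\<^sub>R Z i \<omega>) + \<gamma> * (Dl x - \<gamma> * (gF x \<bullet> gh \<omega>) + Lt / 2 * \<gamma>\<^sup>2 * (norm (gh \<omega>))\<^sup>2)"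
      using n2 gamma_pos by (intro add_left_mono mult_left_mono) auto
    also have "\<dots> = U \<omega>"
      unfolding Psi_def n1 n3 U_def c_def by (simp add: algebra_simps power2_eq_square)
    finally show "Psi (x - \<gamma> *\<^sub>R gh \<omega>) (\<lambda>i. h i + \<beta> i *\<^sub>R Z i \<omega>) + \<gamma> * Dl (x - \<gamma> *\<^sub>R gh \<omega>) \<le> U \<omega>" .
  qed
  have U0: "0 \<le> U \<omega>" for \<omega>
  proof -
    have "0 \<le> Psi (x - \<gamma> *\<^sub>R gh \<omega>) (\<lambda>i. h i + \<beta> i *\<^sub>R Z i \<omega>) + \<gamma> * Dl (x - \<gamma> *\<^sub>R gh \<omega>)"
      using Psi_nn Dl_nn gamma_pos by (simp add: add_nonneg_nonneg)
    then show ?thesis using pw[of \<omega>] by linarith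
  qed
  have "(\<integral>\<^sup>+\<omega>. ennreal (Psi (x - \<gamma> *\<^sub>R gh \<omega>) (\<lambda>i. h i + \<beta> i *\<^sub>R Z i \<omega>) + \<gamma> * Dl (x - \<gamma> *\<^sub>R gh \<omega>)) \<partial>N)
      \<le> (\<integral>\<^sup>+\<omega>. ennreal (U \<omega>) \<partial>N)"
    by (intro nn_integral_mono ennreal_leI pw)
  also have "\<dots> = ennreal (\<integral>\<omega>. U \<omega> \<partial>N)"
    using Uint U0 by (intro nn_integral_eq_integral) auto
  also have "\<dots> \<le> ennreal (Psi x h)" using Ule by (rule ennreal_leI)
  finally show ?thesis unfolding gh_def .
qed

end

locale full = detset2 n f G L xm \<alpha> xs w \<beta> \<gamma>
  for n :: nat
    and f :: "nat \<Rightarrow> 'a::euclidean_space \<Rightarrow> real"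
    and G :: "nat \<Rightarrow> 'a \<Rightarrow> 'a"
    and L :: "nat \<Rightarrow> real"
    and xm :: "nat \<Rightarrow> 'a"
    and \<alpha> :: "nat \<Rightarrow> real"
    and xs :: 'a
    and w \<beta> :: "nat \<Rightarrow> real"
    and \<gamma> :: real +
  fixes M :: "'m measure"
    and S :: "'s measure"
    and \<xi> :: "nat \<Rightarrow> nat \<Rightarrow> 'm \<Rightarrow> 's"
    and Q :: "nat \<Rightarrow> nat \<Rightarrow> 's \<Rightarrow> 'a \<Rightarrow> 'a"
    and x0 :: 'a
    and h0 :: "nat \<Rightarrow> 'a"
    and x :: "nat \<Rightarrow> 'm \<Rightarrow> 'a"
    and h :: "nat \<Rightarrow> nat \<Rightarrow> 'm \<Rightarrow> 'a"
  assumes prob: "prob_space M"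
    and indep: "prob_space.indep_vars M (\<lambda>_. S) (\<lambda>(kk, i). \<xi> kk i) {(kk, i). i < n}"
    and Q_meas: "\<And>kk i. i < n \<Longrightarrow> (\<lambda>(s, v). Q kk i s v) \<in> borel_measurable (S \<Otimes>\<^sub>M borel)"
    and Q_unbiased: "\<And>kk i v. i < n \<Longrightarrow>
        integrable M (\<lambda>\<omega>. Q kk i (\<xi> kk i \<omega>) v) \<and> (\<integral>\<omega>. Q kk i (\<xi> kk i \<omega>) v \<partial>M) = v"
    and Q_var: "\<And>kk i v. i < n \<Longrightarrow>
        integrable M (\<lambda>\<omega>. (norm (Q kk i (\<xi> kk i \<omega>) v - v))\<^sup>2) \<and>
        (\<integral>\<omega>. (norm (Q kk i (\<xi> kk i \<omega>) v - v))\<^sup>2 \<partial>M) \<le> w i * (norm v)\<^sup>2"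
    and x_init: "\<And>\<omega>. x 0 \<omega> = x0"
    and h_init: "\<And>i \<omega>. h 0 i \<omega> = h0 i"
    and h_step: "\<And>kk i \<omega>. h (Suc kk) i \<omega> = h kk i \<omega> + \<beta> i *\<^sub>R
        Q kk i (\<xi> kk i \<omega>) (\<alpha> i *\<^sub>R G i (shiftT (\<alpha> i) (xm i) (x kk \<omega>)) - h kk i \<omega>)"
    and x_step: "\<And>kk \<omega>. x (Suc kk) \<omega> = x kk \<omega> - \<gamma> *\<^sub>R ((1 / real n) *\<^sub>R
        (\<Sum>i<n. h kk i \<omega> + Q kk i (\<xi> kk i \<omega>)
            (\<alpha> i *\<^sub>R G i (shiftT (\<alpha> i) (xm i) (x kk \<omega>)) - h kk i \<omega>)))"
begin

interpretation P: prob_space M by (rule prob)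

primrec st :: "nat \<Rightarrow> (nat \<times> nat \<Rightarrow> 's) \<Rightarrow> 'a \<times> (nat \<Rightarrow> 'a)" where
  "st 0 p = (x0, h0)"
| "st (Suc k) p = (fst (st k p) - \<gamma> *\<^sub>R ((1 / real n) *\<^sub>R
        (\<Sum>i<n. snd (st k p) i + Q k i (p (k, i)) (gi i (fst (st k p)) - snd (st k p) i))),
      \<lambda>i. snd (st k p) i + \<beta> i *\<^sub>R Q k i (p (k, i)) (gi i (fst (st k p)) - snd (st k p) i))"

definition "Xi \<omega> = (\<lambda>(j, l). \<xi> j l \<omega>)"

lemma x_h_st: "x k \<omega> = fst (st k (Xi \<omega>)) \<and> (\<forall>i. h k i \<omega> = snd (st k (Xi \<omega>)) i)"
proof (induction k)
  case 0
  then show ?case by (simp add: x_init h_init)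
next
  case (Suc k)
  then show ?case
    by (simp add: x_step h_step gi_def Xi_def)
qed

lemma st_local:
  "(\<And>j l. j < k \<Longrightarrow> l < n \<Longrightarrow> p (j, l) = p' (j, l)) \<Longrightarrow>
    fst (st k p) = fst (st k p') \<and> (\<forall>i<n. snd (st k p) i = snd (st k p') i)"
proof (induction k)
  case 0
  then show ?case by simp
next
  case (Suc k)
  then have IH: "fst (st k p) = fst (st k p')" "\<And>i. i < n \<Longrightarrow> snd (st k p) i = snd (st k p') i"
    by auto
  have pk: "\<And>i. i < n \<Longrightarrow> p (k, i) = p' (k, i)" using Suc.prems by auto
  show ?case using IH pk by (auto intro!: sum.cong)
qed

definition "past k = {(j, l). j < k \<and> l < n}"
definition "cur k = {(j, l). j = k \<and> l < n}"

lemma G_meas: "i < n \<Longrightarrow> G i \<in> borel_measurable borel"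
proof -
  assume i: "i < n"
  have "(L i)-lipschitz_on UNIV (G i)"
    unfolding lipschitz_on_def using L_nn[OF i] smooth[OF i] by (auto simp: dist_norm)
  then show ?thesis by (intro borel_measurable_continuous_onI lipschitz_on_continuous_on)
qed

lemma f_meas: "i < n \<Longrightarrow> f i \<in> borel_measurable borel"
proof -
  assume i: "i < n"
  have "continuous_on UNIV (f i)"
    using grad[OF i] unfolding gderiv_def
    by (intro continuous_at_imp_continuous_on ballI has_derivative_continuous) blast
  then show ?thesis by (rule borel_measurable_continuous_onI)
qed

lemma gi_meas: "i < n \<Longrightarrow> X \<in> borel_measurable N \<Longrightarrow> (\<lambda>z. gi i (X z)) \<in> borel_measurable N"
  unfolding gi_def shiftT_def
  by (intro borel_measurable_scaleR borel_measurable_const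
      measurable_compose[OF _ G_meas] borel_measurable_add) auto

lemma Ft_meas: "X \<in> borel_measurable N \<Longrightarrow> (\<lambda>z. Ft (X z)) \<in> borel_measurable N"
  unfolding ftilde_def shiftT_def
  by (intro borel_measurable_times borel_measurable_const borel_measurable_sum
      measurable_compose[OF _ f_meas] borel_measurable_add borel_measurable_scaleR) auto

lemma Dl_meas: "X \<in> borel_measurable N \<Longrightarrow> (\<lambda>z. Dl (X z)) \<in> borel_measurable N"
  unfolding Dl_def by (intro borel_measurable_diff Ft_meas borel_measurable_const)

lemma Psi_meas: "X \<in> borel_measurable N \<Longrightarrow> (\<And>i. i < n \<Longrightarrow> (\<lambda>z. Hh z i) \<in> borel_measurable N) \<Longrightarrow>
    (\<lambda>z. Psi (X z) (Hh z)) \<in> borel_measurable N"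
  unfolding Psi_def sig_def
  by (intro borel_measurable_add borel_measurable_times borel_measurable_power borel_measurable_const
      borel_measurable_sum measurable_compose[OF _ borel_measurable_norm] borel_measurable_diff) auto

lemma Qc: "i < n \<Longrightarrow> a \<in> measurable N S \<Longrightarrow> b \<in> borel_measurable N \<Longrightarrow> (\<lambda>z. Q k i (a z) (b z)) \<in> borel_measurable N"
proof -
  assume i: "i < n" and a: "a \<in> measurable N S" and b: "b \<in> borel_measurable N"
  have "(\<lambda>z. (a z, b z)) \<in> measurable N (S \<Otimes>\<^sub>M borel)" using a b by (rule measurable_Pair)
  from measurable_compose[OF this Q_meas[OF i]] show ?thesis by simp
qed

lemma stepx_meas:
  assumes "X \<in> borel_measurable N" "\<And>i. i < n \<Longrightarrow> (\<lambda>z. Hh z i) \<in> borel_measurable N"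
    "\<And>i. i < n \<Longrightarrow> a i \<in> measurable N S"
  shows "(\<lambda>z. X z - \<gamma> *\<^sub>R ((1 / real n) *\<^sub>R (\<Sum>i<n. Hh z i + Q k i (a i z) (gi i (X z) - Hh z i)))) \<in> borel_measurable N"
  using assms
  by (intro borel_measurable_diff borel_measurable_scaleR borel_measurable_const borel_measurable_sum
      borel_measurable_add Qc gi_meas) auto

lemma steph_meas:
  assumes "X \<in> borel_measurable N" "\<And>i. i < n \<Longrightarrow> (\<lambda>z. Hh z i) \<in> borel_measurable N"
    "i < n" "a \<in> measurable N S"
  shows "(\<lambda>z. Hh z i + \<beta> i *\<^sub>R Q k i (a z) (gi i (X z) - Hh z i)) \<in> borel_measurable N"
  using assms
  by (intro borel_measurable_diff borel_measurable_scaleR borel_measurable_const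
      borel_measurable_add Qc gi_meas) auto

lemma st_meas:
  "past k \<subseteq> A \<Longrightarrow> (\<lambda>p. fst (st k p)) \<in> borel_measurable (PiM A (\<lambda>_. S)) \<and>
     (\<forall>i<n. (\<lambda>p. snd (st k p) i) \<in> borel_measurable (PiM A (\<lambda>_. S)))"
proof (induction k)
  case 0
  then show ?case by simp
next
  case (Suc k)
  have "past k \<subseteq> past (Suc k)" unfolding past_def by auto
  with Suc.prems Suc.IH have IH: "(\<lambda>p. fst (st k p)) \<in> borel_measurable (PiM A (\<lambda>_. S))"
    "\<And>i. i < n \<Longrightarrow> (\<lambda>p. snd (st k p) i) \<in> borel_measurable (PiM A (\<lambda>_. S))" by auto
  have a: "i < n \<Longrightarrow> (\<lambda>p. p (k, i)) \<in> measurable (PiM A (\<lambda>_. S)) S" for i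
    using Suc.prems unfolding past_def by (intro measurable_component_singleton) auto
  have "(\<lambda>p. fst (st (Suc k) p)) \<in> borel_measurable (PiM A (\<lambda>_. S))"
    using stepx_meas[OF IH, where a="\<lambda>i p. p (k, i)" and k=k] a by simp
  moreover have "(\<lambda>p. snd (st (Suc k) p) i) \<in> borel_measurable (PiM A (\<lambda>_. S))" if i: "i < n" for i
    using steph_meas[OF IH i a[OF i], where k=k] by simp
  ultimately show ?case by auto
qed


lemma xi_meas: "i < n \<Longrightarrow> \<xi> k i \<in> measurable M S"
proof -
  assume i: "i < n"
  have "\<forall>j\<in>{(kk, i). i < n}. (\<lambda>(kk, i). \<xi> kk i) j \<in> measurable M S"
    using indep unfolding P.indep_vars_def by blast
  then show ?thesis using i by auto
qed

lemma x_step': "x (Suc k) \<omega> = x k \<omega> - \<gamma> *\<^sub>R ((1 / real n) *\<^sub>R (\<Sum>i<n. h k i \<omega> + Q k i (\<xi> k i \<omega>) (gi i (x k \<omega>) - h k i \<omega>)))"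
  by (simp add: x_step gi_def)

lemma h_step': "h (Suc k) i \<omega> = h k i \<omega> + \<beta> i *\<^sub>R Q k i (\<xi> k i \<omega>) (gi i (x k \<omega>) - h k i \<omega>)"
  by (simp add: h_step gi_def)

lemma x_meas: "x k \<in> borel_measurable M \<and> (\<forall>i<n. h k i \<in> borel_measurable M)"
proof (induction k)
  case 0
  then show ?case by (simp add: x_init[abs_def] h_init[abs_def])
next
  case (Suc k)
  then have IH: "(\<lambda>\<omega>. x k \<omega>) \<in> borel_measurable M" "\<And>i. i < n \<Longrightarrow> (\<lambda>\<omega>. h k i \<omega>) \<in> borel_measurable M" by auto
  have "(\<lambda>\<omega>. x (Suc k) \<omega>) \<in> borel_measurable M"
    unfolding x_step' by (rule stepx_meas[OF IH xi_meas])
  moreover have "(\<lambda>\<omega>. h (Suc k) i \<omega>) \<in> borel_measurable M" if i: "i < n" for i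
    unfolding h_step' by (rule steph_meas[OF IH i xi_meas[OF i]])
  ultimately show ?case by auto
qed

lemma Psi_cong: "(\<And>i. i < n \<Longrightarrow> H i = H' i) \<Longrightarrow> Psi X H = Psi X H'"
proof -
  assume a: "\<And>i. i < n \<Longrightarrow> H i = H' i"
  have "sig H = sig H'" unfolding sig_def using a by (intro arg_cong[where f="\<lambda>s. (1 / real n) * s"] sum.cong) auto
  then show ?thesis unfolding Psi_def by simp
qed

definition "Pk k \<omega> = restrict (\<lambda>i. (\<lambda>(kk, i). \<xi> kk i) i \<omega>) (past k)"
definition "Ck k \<omega> = restrict (\<lambda>i. (\<lambda>(kk, i). \<xi> kk i) i \<omega>) (cur k)"

lemma indep_PC: "P.indep_var (PiM (past k) (\<lambda>_. S)) (Pk k) (PiM (cur k) (\<lambda>_. S)) (Ck k)"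
  unfolding Pk_def Ck_def
  by (rule P.indep_var_restrict[OF indep]) (auto simp: past_def cur_def)

lemma x_Pk: "x k \<omega> = fst (st k (Pk k \<omega>)) \<and> (\<forall>i<n. h k i \<omega> = snd (st k (Pk k \<omega>)) i)"
proof -
  have "fst (st k (Xi \<omega>)) = fst (st k (Pk k \<omega>)) \<and> (\<forall>i<n. snd (st k (Xi \<omega>)) i = snd (st k (Pk k \<omega>)) i)"
    by (rule st_local) (simp add: Xi_def Pk_def past_def)
  then show ?thesis using x_h_st[of k \<omega>] by simp
qed

lemma cross:
  assumes i: "i < n" and j: "j < n" and ij: "i \<noteq> j"
  shows "integrable M (\<lambda>\<omega>. (Q k i (\<xi> k i \<omega>) a - a) \<bullet> (Q k j (\<xi> k j \<omega>) b - b)) \<and>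
         (\<integral>\<omega>. (Q k i (\<xi> k i \<omega>) a - a) \<bullet> (Q k j (\<xi> k j \<omega>) b - b) \<partial>M) = 0"
proof -
  have ind: "P.indep_var S (\<xi> k i) S (\<xi> k j)"
  proof -
    have "P.indep_var (PiM {(k, i)} (\<lambda>_. S)) (\<lambda>\<omega>. restrict (\<lambda>q. (\<lambda>(kk, i). \<xi> kk i) q \<omega>) {(k, i)})
                      (PiM {(k, j)} (\<lambda>_. S)) (\<lambda>\<omega>. restrict (\<lambda>q. (\<lambda>(kk, i). \<xi> kk i) q \<omega>) {(k, j)})"
      using i j ij by (intro P.indep_var_restrict[OF indep]) auto
    from P.indep_var_compose[OF this measurable_component_singleton[of "(k, i)" "{(k, i)}" "\<lambda>_. S"]
        measurable_component_singleton[of "(k, j)" "{(k, j)}" "\<lambda>_. S"]]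
    show ?thesis by (simp add: o_def)
  qed
  define A where "A \<omega> = Q k i (\<xi> k i \<omega>) a - a" for \<omega>
  define B where "B \<omega> = Q k j (\<xi> k j \<omega>) b - b" for \<omega>
  have Aint: "integrable M A" and Amean: "(\<integral>\<omega>. A \<omega> \<partial>M) = 0"
    using Q_unbiased[OF i, of k a] unfolding A_def by (auto simp: P.prob_space)
  have Bint: "integrable M B" and Bmean: "(\<integral>\<omega>. B \<omega> \<partial>M) = 0"
    using Q_unbiased[OF j, of k b] unfolding B_def by (auto simp: P.prob_space)
  have Qm: "l < n \<Longrightarrow> (\<lambda>s. Q k l s c - c) \<in> borel_measurable S" for l c
    by (intro borel_measurable_diff Qc[where N=S] measurable_ident_sets borel_measurable_const) auto
  have comp: "P.indep_var borel (\<lambda>\<omega>. A \<omega> \<bullet> e) borel (\<lambda>\<omega>. B \<omega> \<bullet> e)" for e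
  proof -
    have m1: "(\<lambda>s. (Q k i s a - a) \<bullet> e) \<in> borel_measurable S"
      using Qm[OF i] by (intro borel_measurable_inner borel_measurable_const) auto
    have m2: "(\<lambda>s. (Q k j s b - b) \<bullet> e) \<in> borel_measurable S"
      using Qm[OF j] by (intro borel_measurable_inner borel_measurable_const) auto
    from P.indep_var_compose[OF ind m1 m2] show ?thesis unfolding A_def B_def by (simp add: o_def)
  qed
  have eq: "A \<omega> \<bullet> B \<omega> = (\<Sum>e\<in>Basis. (A \<omega> \<bullet> e) * (B \<omega> \<bullet> e))" for \<omega>
    by (rule euclidean_inner)
  have ie: "integrable M (\<lambda>\<omega>. (A \<omega> \<bullet> e) * (B \<omega> \<bullet> e))" for e
    using comp[of e] Aint Bint by (intro P.indep_var_integrable) auto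
  have me: "(\<integral>\<omega>. (A \<omega> \<bullet> e) * (B \<omega> \<bullet> e) \<partial>M) = 0" for e
    using P.indep_var_lebesgue_integral[OF comp[of e]] Aint Bint Amean by auto
  have "integrable M (\<lambda>\<omega>. A \<omega> \<bullet> B \<omega>)"
    unfolding eq by (intro Bochner_Integration.integrable_sum ie)
  moreover have "(\<integral>\<omega>. A \<omega> \<bullet> B \<omega> \<partial>M) = 0"
    unfolding eq using ie me by (simp add: Bochner_Integration.integral_sum)
  ultimately show ?thesis unfolding A_def B_def by simp
qed


lemma step_k:
  "(\<integral>\<^sup>+\<omega>. ennreal (Psi (x (Suc k) \<omega>) (\<lambda>i. h (Suc k) i \<omega>) + \<gamma> * Dl (x (Suc k) \<omega>)) \<partial>M)
    \<le> (\<integral>\<^sup>+\<omega>. ennreal (Psi (x k \<omega>) (\<lambda>i. h k i \<omega>)) \<partial>M)"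
proof -
  define Ap where "Ap = PiM (past k) (\<lambda>_. S)"
  define Ac where "Ac = PiM (cur k) (\<lambda>_. S)"
  define XP where "XP p = fst (st k p)" for p
  define HP where "HP p = snd (st k p)" for p
  define Xn where "Xn p c = XP p - \<gamma> *\<^sub>R ((1 / real n) *\<^sub>R
        (\<Sum>i<n. HP p i + Q k i (c (k, i)) (gi i (XP p) - HP p i)))" for p c
  define Hn where "Hn p c = (\<lambda>i. HP p i + \<beta> i *\<^sub>R Q k i (c (k, i)) (gi i (XP p) - HP p i))" for p c
  define Hf where "Hf pc = ennreal (Psi (Xn (fst pc) (snd pc)) (Hn (fst pc) (snd pc)) + \<gamma> * Dl (Xn (fst pc) (snd pc)))" for pc
  have ind: "P.indep_var Ap (Pk k) Ac (Ck k)" unfolding Ap_def Ac_def by (rule indep_PC)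
  have rvP: "Pk k \<in> measurable M Ap" using P.indep_var_rv1[OF ind] .
  have rvC: "Ck k \<in> measurable M Ac" using P.indep_var_rv2[OF ind] .
  interpret DP: prob_space "distr M Ap (Pk k)" by (rule P.prob_space_distr[OF rvP])
  interpret DC: prob_space "distr M Ac (Ck k)" by (rule P.prob_space_distr[OF rvC])
  interpret PP: pair_prob_space "distr M Ap (Pk k)" "distr M Ac (Ck k)" ..
  have XPm: "XP \<in> borel_measurable Ap" and HPm: "\<And>i. i < n \<Longrightarrow> (\<lambda>p. HP p i) \<in> borel_measurable Ap"
    using st_meas[of k "past k"] unfolding XP_def HP_def Ap_def by auto
  have Hfm: "Hf \<in> borel_measurable (Ap \<Otimes>\<^sub>M Ac)"
  proof -
    have X1: "(\<lambda>pc. XP (fst pc)) \<in> borel_measurable (Ap \<Otimes>\<^sub>M Ac)"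
      by (rule measurable_compose[OF measurable_fst XPm])
    have H1: "(\<lambda>pc. HP (fst pc) i) \<in> borel_measurable (Ap \<Otimes>\<^sub>M Ac)" if "i < n" for i
      by (rule measurable_compose[OF measurable_fst HPm[OF that]])
    have C1: "(\<lambda>pc. snd pc (k, i)) \<in> measurable (Ap \<Otimes>\<^sub>M Ac) S" if "i < n" for i
      unfolding Ac_def using that
      by (intro measurable_compose[OF measurable_snd measurable_component_singleton]) (auto simp: cur_def)
    have Xnm: "(\<lambda>pc. Xn (fst pc) (snd pc)) \<in> borel_measurable (Ap \<Otimes>\<^sub>M Ac)"
      unfolding Xn_def by (rule stepx_meas[OF X1 H1 C1])
    have Hnm: "(\<lambda>pc. Hn (fst pc) (snd pc) i) \<in> borel_measurable (Ap \<Otimes>\<^sub>M Ac)" if "i < n" for i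
      unfolding Hn_def by (rule steph_meas[OF X1 H1 that C1[OF that]])
    show ?thesis unfolding Hf_def
      by (intro measurable_compose[OF _ measurable_ennreal] borel_measurable_add borel_measurable_times
          borel_measurable_const Psi_meas Dl_meas Xnm Hnm)
  qed
  have lhs: "(\<integral>\<^sup>+\<omega>. ennreal (Psi (x (Suc k) \<omega>) (\<lambda>i. h (Suc k) i \<omega>) + \<gamma> * Dl (x (Suc k) \<omega>)) \<partial>M)
      = (\<integral>\<^sup>+\<omega>. Hf (Pk k \<omega>, Ck k \<omega>) \<partial>M)"
  proof (intro nn_integral_cong)
    fix \<omega>
    have C: "i < n \<Longrightarrow> Ck k \<omega> (k, i) = \<xi> k i \<omega>" for i unfolding Ck_def cur_def by simp
    have xk: "x k \<omega> = XP (Pk k \<omega>)" and hk: "\<And>i. i < n \<Longrightarrow> h k i \<omega> = HP (Pk k \<omega>) i"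
      using x_Pk[of k \<omega>] unfolding XP_def HP_def by auto
    have X: "x (Suc k) \<omega> = Xn (Pk k \<omega>) (Ck k \<omega>)"
      unfolding x_step' Xn_def using xk hk C by (auto intro!: sum.cong)
    have H: "i < n \<Longrightarrow> h (Suc k) i \<omega> = Hn (Pk k \<omega>) (Ck k \<omega>) i" for i
      unfolding h_step' Hn_def using xk hk C by auto
    show "ennreal (Psi (x (Suc k) \<omega>) (\<lambda>i. h (Suc k) i \<omega>) + \<gamma> * Dl (x (Suc k) \<omega>)) = Hf (Pk k \<omega>, Ck k \<omega>)"
      unfolding Hf_def using H X by (simp add: Psi_cong[of "\<lambda>i. h (Suc k) i \<omega>" "Hn (Pk k \<omega>) (Ck k \<omega>)"])
  qed
  also have "\<dots> = (\<integral>\<^sup>+z. Hf z \<partial>distr M (Ap \<Otimes>\<^sub>M Ac) (\<lambda>\<omega>. (Pk k \<omega>, Ck k \<omega>)))"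
    by (rule nn_integral_distr[symmetric]) (auto intro: measurable_Pair rvP rvC Hfm)
  also have "distr M (Ap \<Otimes>\<^sub>M Ac) (\<lambda>\<omega>. (Pk k \<omega>, Ck k \<omega>)) = distr M Ap (Pk k) \<Otimes>\<^sub>M distr M Ac (Ck k)"
    using ind unfolding P.indep_var_distribution_eq by simp
  also have "(\<integral>\<^sup>+z. Hf z \<partial>(distr M Ap (Pk k) \<Otimes>\<^sub>M distr M Ac (Ck k)))
      = (\<integral>\<^sup>+p. \<integral>\<^sup>+c. Hf (p, c) \<partial>distr M Ac (Ck k) \<partial>distr M Ap (Pk k))"
    by (rule DC.nn_integral_fst[symmetric])
       (simp add: Hfm measurable_cong_sets[OF sets_pair_measure_cong[OF sets_distr sets_distr] refl])
  also have "\<dots> \<le> (\<integral>\<^sup>+p. ennreal (Psi (XP p) (HP p)) \<partial>distr M Ap (Pk k))"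
  proof (intro nn_integral_mono)
    fix p assume p: "p \<in> space (distr M Ap (Pk k))"
    then have p': "p \<in> space Ap" by simp
    have "(\<integral>\<^sup>+c. Hf (p, c) \<partial>distr M Ac (Ck k)) = (\<integral>\<^sup>+\<omega>. Hf (p, Ck k \<omega>) \<partial>M)"
      by (rule nn_integral_distr[OF rvC]) (simp add: measurable_Pair2[OF Hfm p'])
    also have "\<dots> = (\<integral>\<^sup>+\<omega>. ennreal (Psi (XP p - \<gamma> *\<^sub>R ((1 / real n) *\<^sub>R (\<Sum>i<n. HP p i + Q k i (\<xi> k i \<omega>) (gi i (XP p) - HP p i))))
                              (\<lambda>i. HP p i + \<beta> i *\<^sub>R Q k i (\<xi> k i \<omega>) (gi i (XP p) - HP p i))
                       + \<gamma> * Dl (XP p - \<gamma> *\<^sub>R ((1 / real n) *\<^sub>R (\<Sum>i<n. HP p i + Q k i (\<xi> k i \<omega>) (gi i (XP p) - HP p i))))) \<partial>M)"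
    proof (intro nn_integral_cong)
      fix \<omega>
      have C: "i < n \<Longrightarrow> Ck k \<omega> (k, i) = \<xi> k i \<omega>" for i unfolding Ck_def cur_def by simp
      have X: "Xn p (Ck k \<omega>) = XP p - \<gamma> *\<^sub>R ((1 / real n) *\<^sub>R (\<Sum>i<n. HP p i + Q k i (\<xi> k i \<omega>) (gi i (XP p) - HP p i)))"
        unfolding Xn_def using C by (auto intro!: sum.cong)
      show "Hf (p, Ck k \<omega>) = ennreal (Psi (XP p - \<gamma> *\<^sub>R ((1 / real n) *\<^sub>R (\<Sum>i<n. HP p i + Q k i (\<xi> k i \<omega>) (gi i (XP p) - HP p i))))
                              (\<lambda>i. HP p i + \<beta> i *\<^sub>R Q k i (\<xi> k i \<omega>) (gi i (XP p) - HP p i))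
                       + \<gamma> * Dl (XP p - \<gamma> *\<^sub>R ((1 / real n) *\<^sub>R (\<Sum>i<n. HP p i + Q k i (\<xi> k i \<omega>) (gi i (XP p) - HP p i)))))"
        unfolding Hf_def fst_conv snd_conv X
        by (subst Psi_cong[of _ "\<lambda>i. HP p i + \<beta> i *\<^sub>R Q k i (\<xi> k i \<omega>) (gi i (XP p) - HP p i)"]) (auto simp: Hn_def C)
    qed
    also have "\<dots> \<le> ennreal (Psi (XP p) (HP p))"
    proof (rule one_step[OF prob, where Z="\<lambda>i \<omega>. Q k i (\<xi> k i \<omega>) (gi i (XP p) - HP p i)"])
      fix i assume i: "i < n"
      show "integrable M (\<lambda>\<omega>. Q k i (\<xi> k i \<omega>) (gi i (XP p) - HP p i))" using Q_unbiased[OF i] by blast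
      show "(\<integral>\<omega>. Q k i (\<xi> k i \<omega>) (gi i (XP p) - HP p i) \<partial>M) = gi i (XP p) - HP p i" using Q_unbiased[OF i] by blast
      show "integrable M (\<lambda>\<omega>. (norm (Q k i (\<xi> k i \<omega>) (gi i (XP p) - HP p i) - (gi i (XP p) - HP p i)))\<^sup>2) \<and>
         (\<integral>\<omega>. (norm (Q k i (\<xi> k i \<omega>) (gi i (XP p) - HP p i) - (gi i (XP p) - HP p i)))\<^sup>2 \<partial>M)
           \<le> w i * (norm (gi i (XP p) - HP p i))\<^sup>2" using Q_var[OF i] by blast
    next
      fix i j assume "i < n" "j < n" "i \<noteq> j"
      then show "integrable M (\<lambda>\<omega>. (Q k i (\<xi> k i \<omega>) (gi i (XP p) - HP p i) - (gi i (XP p) - HP p i)) \<bullet>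
                                  (Q k j (\<xi> k j \<omega>) (gi j (XP p) - HP p j) - (gi j (XP p) - HP p j))) \<and>
          (\<integral>\<omega>. (Q k i (\<xi> k i \<omega>) (gi i (XP p) - HP p i) - (gi i (XP p) - HP p i)) \<bullet>
                 (Q k j (\<xi> k j \<omega>) (gi j (XP p) - HP p j) - (gi j (XP p) - HP p j)) \<partial>M) = 0"
        by (rule cross)
    qed
    finally show "(\<integral>\<^sup>+c. Hf (p, c) \<partial>distr M Ac (Ck k)) \<le> ennreal (Psi (XP p) (HP p))" .
  qed
  also have "\<dots> = (\<integral>\<^sup>+\<omega>. ennreal (Psi (XP (Pk k \<omega>)) (HP (Pk k \<omega>))) \<partial>M)"
    by (rule nn_integral_distr[OF rvP])
       (unfold measurable_distr_eq1, auto intro!: measurable_compose[OF _ measurable_ennreal] Psi_meas XPm HPm)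
  also have "\<dots> = (\<integral>\<^sup>+\<omega>. ennreal (Psi (x k \<omega>) (\<lambda>i. h k i \<omega>)) \<partial>M)"
  proof (intro nn_integral_cong)
    fix \<omega>
    have xk: "x k \<omega> = XP (Pk k \<omega>)" and hk: "\<And>i. i < n \<Longrightarrow> h k i \<omega> = HP (Pk k \<omega>) i"
      using x_Pk[of k \<omega>] unfolding XP_def HP_def by auto
    show "ennreal (Psi (XP (Pk k \<omega>)) (HP (Pk k \<omega>))) = ennreal (Psi (x k \<omega>) (\<lambda>i. h k i \<omega>))"
      using xk hk Psi_cong[of "HP (Pk k \<omega>)" "\<lambda>i. h k i \<omega>"] by simp
  qed
  finally show ?thesis .
qed


lemma jensen:
  assumes J: "finite J" "J \<noteq> {}"
  shows "Ft ((1 / real (card J)) *\<^sub>R (\<Sum>j\<in>J. y j)) \<le> (1 / real (card J)) * (\<Sum>j\<in>J. Ft (y j))"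
proof -
  define z where "z = (1 / real (card J)) *\<^sub>R (\<Sum>j\<in>J. y j)"
  have cJ: "0 < real (card J)" using J by (simp add: card_gt_0_iff)
  have sz: "(\<Sum>j\<in>J. y j) = real (card J) *\<^sub>R z" unfolding z_def using cJ by simp
  have "(\<Sum>j\<in>J. Ft z + gF z \<bullet> (y j - z)) \<le> (\<Sum>j\<in>J. Ft (y j))"
    by (intro sum_mono Ft_gi)
  moreover have "(\<Sum>j\<in>J. Ft z + gF z \<bullet> (y j - z)) = real (card J) * Ft z + gF z \<bullet> ((\<Sum>j\<in>J. y j) - real (card J) *\<^sub>R z)"
    by (simp add: sum.distrib inner_sum_right[symmetric] sum_subtractf inner_diff_right)
  ultimately have "real (card J) * Ft z \<le> (\<Sum>j\<in>J. Ft (y j))" unfolding sz by simp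
  then show ?thesis unfolding z_def[symmetric] using cJ by (simp add: field_simps)
qed

lemma telescope:
  "(\<integral>\<^sup>+\<omega>. ennreal (Psi (x K \<omega>) (\<lambda>i. h K i \<omega>)) \<partial>M) + ennreal \<gamma> * (\<Sum>j\<in>{1..K}. \<integral>\<^sup>+\<omega>. ennreal (Dl (x j \<omega>)) \<partial>M)
    \<le> ennreal (Psi x0 h0)"
proof (induction K)
  case 0
  have "(\<integral>\<^sup>+\<omega>. ennreal (Psi (x 0 \<omega>) (\<lambda>i. h 0 i \<omega>)) \<partial>M) = ennreal (Psi x0 h0)"
    using P.emeasure_space_1 by (simp add: x_init h_init)
  then show ?case by simp
next
  case (Suc K)
  have mX: "(\<lambda>\<omega>. ennreal (Psi (x (Suc K) \<omega>) (\<lambda>i. h (Suc K) i \<omega>))) \<in> borel_measurable M"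
    using x_meas[of "Suc K"] by (auto intro!: measurable_compose[OF _ measurable_ennreal] Psi_meas)
  have mD: "(\<lambda>\<omega>. ennreal (Dl (x (Suc K) \<omega>))) \<in> borel_measurable M"
    using x_meas[of "Suc K"] by (auto intro!: measurable_compose[OF _ measurable_ennreal] Dl_meas)
  have split: "(\<integral>\<^sup>+\<omega>. ennreal (Psi (x (Suc K) \<omega>) (\<lambda>i. h (Suc K) i \<omega>) + \<gamma> * Dl (x (Suc K) \<omega>)) \<partial>M)
      = (\<integral>\<^sup>+\<omega>. ennreal (Psi (x (Suc K) \<omega>) (\<lambda>i. h (Suc K) i \<omega>)) \<partial>M) + ennreal \<gamma> * (\<integral>\<^sup>+\<omega>. ennreal (Dl (x (Suc K) \<omega>)) \<partial>M)"
  proof -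
    have "(\<integral>\<^sup>+\<omega>. ennreal (Psi (x (Suc K) \<omega>) (\<lambda>i. h (Suc K) i \<omega>) + \<gamma> * Dl (x (Suc K) \<omega>)) \<partial>M)
        = (\<integral>\<^sup>+\<omega>. ennreal (Psi (x (Suc K) \<omega>) (\<lambda>i. h (Suc K) i \<omega>)) + ennreal \<gamma> * ennreal (Dl (x (Suc K) \<omega>)) \<partial>M)"
      using Psi_nn Dl_nn gamma_pos by (intro nn_integral_cong) (simp add: ennreal_plus ennreal_mult)
    also have "\<dots> = (\<integral>\<^sup>+\<omega>. ennreal (Psi (x (Suc K) \<omega>) (\<lambda>i. h (Suc K) i \<omega>)) \<partial>M) + (\<integral>\<^sup>+\<omega>. ennreal \<gamma> * ennreal (Dl (x (Suc K) \<omega>)) \<partial>M)"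
      using mX mD by (intro nn_integral_add) auto
    also have "(\<integral>\<^sup>+\<omega>. ennreal \<gamma> * ennreal (Dl (x (Suc K) \<omega>)) \<partial>M) = ennreal \<gamma> * (\<integral>\<^sup>+\<omega>. ennreal (Dl (x (Suc K) \<omega>)) \<partial>M)"
      using mD by (rule nn_integral_cmult)
    finally show ?thesis .
  qed
  have "(\<integral>\<^sup>+\<omega>. ennreal (Psi (x (Suc K) \<omega>) (\<lambda>i. h (Suc K) i \<omega>)) \<partial>M) + ennreal \<gamma> * (\<Sum>j\<in>{1..Suc K}. \<integral>\<^sup>+\<omega>. ennreal (Dl (x j \<omega>)) \<partial>M)
      = ((\<integral>\<^sup>+\<omega>. ennreal (Psi (x (Suc K) \<omega>) (\<lambda>i. h (Suc K) i \<omega>)) \<partial>M) + ennreal \<gamma> * (\<integral>\<^sup>+\<omega>. ennreal (Dl (x (Suc K) \<omega>)) \<partial>M))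
        + ennreal \<gamma> * (\<Sum>j\<in>{1..K}. \<integral>\<^sup>+\<omega>. ennreal (Dl (x j \<omega>)) \<partial>M)"
    by (simp add: distrib_left add_ac)
  also have "\<dots> \<le> (\<integral>\<^sup>+\<omega>. ennreal (Psi (x K \<omega>) (\<lambda>i. h K i \<omega>)) \<partial>M) + ennreal \<gamma> * (\<Sum>j\<in>{1..K}. \<integral>\<^sup>+\<omega>. ennreal (Dl (x j \<omega>)) \<partial>M)"
    using step_k[of K] unfolding split by (rule add_right_mono)
  also have "\<dots> \<le> ennreal (Psi x0 h0)" by (rule Suc.IH)
  finally show ?case .
qed

lemma final:
  assumes k: "k \<ge> 1"
  shows "(\<integral>\<^sup>+ \<omega>. ennreal (Ft ((1 / real k) *\<^sub>R (\<Sum>j=1..k. x j \<omega>)) - Ft xs) \<partial>M)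
         \<le> ennreal ((2 * (Ft x0 - Ft xs)
              + 4 * \<gamma> / (real n * Min (\<beta> ` {..<n}))
                  * ((1 / real n) * (\<Sum>i<n. w i * (norm (h0 i - \<alpha> i *\<^sub>R
                        G i (shiftT (\<alpha> i) (xm i) xs)))\<^sup>2))
              + (1 / \<gamma>) * (norm (x0 - xs))\<^sup>2) * (1 / real k))"
proof -
  define T where "T = (\<Sum>j\<in>{1..k}. \<integral>\<^sup>+\<omega>. ennreal (Dl (x j \<omega>)) \<partial>M)"
  have cardk: "card {1..k} = k" by simp
  have g: "0 < \<gamma>" by (rule gamma_pos)
  have pw: "Ft ((1 / real k) *\<^sub>R (\<Sum>j=1..k. x j \<omega>)) - Ft xs \<le> (1 / real k) * (\<Sum>j=1..k. Dl (x j \<omega>))" for \<omega>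
  proof -
    have "Ft ((1 / real k) *\<^sub>R (\<Sum>j=1..k. x j \<omega>)) \<le> (1 / real k) * (\<Sum>j=1..k. Ft (x j \<omega>))"
      using jensen[of "{1..k}" "\<lambda>j. x j \<omega>"] k unfolding cardk by simp
    moreover have "(1 / real k) * (\<Sum>j=1..k. Dl (x j \<omega>)) = (1 / real k) * (\<Sum>j=1..k. Ft (x j \<omega>)) - Ft xs"
      using k unfolding Dl_def by (simp add: sum_subtractf field_simps)
    ultimately show ?thesis by linarith
  qed
  have mD: "j \<in> {1..k} \<Longrightarrow> (\<lambda>\<omega>. ennreal (Dl (x j \<omega>))) \<in> borel_measurable M" for j
    using x_meas[of j] by (auto intro!: measurable_compose[OF _ measurable_ennreal] Dl_meas)
  have "(\<integral>\<^sup>+ \<omega>. ennreal (Ft ((1 / real k) *\<^sub>R (\<Sum>j=1..k. x j \<omega>)) - Ft xs) \<partial>M)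
      \<le> (\<integral>\<^sup>+ \<omega>. ennreal (1 / real k) * (\<Sum>j\<in>{1..k}. ennreal (Dl (x j \<omega>))) \<partial>M)"
  proof (intro nn_integral_mono)
    fix \<omega>
    have "ennreal (1 / real k) * (\<Sum>j\<in>{1..k}. ennreal (Dl (x j \<omega>))) = ennreal ((1 / real k) * (\<Sum>j=1..k. Dl (x j \<omega>)))"
      using Dl_nn by (simp add: ennreal_mult[symmetric] sum_nonneg)
    then show "ennreal (Ft ((1 / real k) *\<^sub>R (\<Sum>j=1..k. x j \<omega>)) - Ft xs) \<le> ennreal (1 / real k) * (\<Sum>j\<in>{1..k}. ennreal (Dl (x j \<omega>)))"
      using pw[of \<omega>] by (simp add: ennreal_leI)
  qed
  also have "\<dots> = ennreal (1 / real k) * T"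
  proof -
    have m: "(\<lambda>\<omega>. \<Sum>j\<in>{1..k}. ennreal (Dl (x j \<omega>))) \<in> borel_measurable M"
      using mD by (intro borel_measurable_sum) auto
    have s: "(\<integral>\<^sup>+\<omega>. (\<Sum>j\<in>{1..k}. ennreal (Dl (x j \<omega>))) \<partial>M) = T"
      unfolding T_def by (rule nn_integral_sum[where f="\<lambda>j \<omega>. ennreal (Dl (x j \<omega>))", OF mD])
    show ?thesis using nn_integral_cmult[OF m, of "ennreal (1 / real k)"] unfolding s by simp
  qed
  also have "T \<le> ennreal (Psi x0 h0 / \<gamma>)"
  proof -
    have "ennreal \<gamma> * T \<le> (\<integral>\<^sup>+\<omega>. ennreal (Psi (x k \<omega>) (\<lambda>i. h k i \<omega>)) \<partial>M) + ennreal \<gamma> * T"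
      by (rule add_increasing) simp_all
    also have "\<dots> \<le> ennreal (Psi x0 h0)" using telescope[of k] unfolding T_def .
    finally have "ennreal \<gamma> * T \<le> ennreal (Psi x0 h0)" .
    then have "ennreal (1 / \<gamma>) * (ennreal \<gamma> * T) \<le> ennreal (1 / \<gamma>) * ennreal (Psi x0 h0)"
      by (rule mult_left_mono) simp
    moreover have "ennreal (1 / \<gamma>) * (ennreal \<gamma> * T) = T"
    proof -
      have "ennreal (1 / \<gamma>) * ennreal \<gamma> = ennreal ((1 / \<gamma>) * \<gamma>)"
        by (rule ennreal_mult[symmetric]) (use g in auto)
      also have "\<dots> = 1" using g by simp
      finally show ?thesis by (simp add: mult.assoc[symmetric])
    qed
    moreover have "ennreal (1 / \<gamma>) * ennreal (Psi x0 h0) = ennreal (Psi x0 h0 / \<gamma>)"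
    proof -
      have "ennreal (1 / \<gamma>) * ennreal (Psi x0 h0) = ennreal ((1 / \<gamma>) * Psi x0 h0)"
        by (rule ennreal_mult[symmetric]) (use g Psi_nn in auto)
      then show ?thesis by simp
    qed
    ultimately show ?thesis by simp
  qed
  then have "ennreal (1 / real k) * T \<le> ennreal (1 / real k) * ennreal (Psi x0 h0 / \<gamma>)"
    by (rule mult_left_mono) simp
  also have "\<dots> = ennreal ((1 / real k) * (Psi x0 h0 / \<gamma>))"
    by (rule ennreal_mult[symmetric]) (use g Psi_nn in auto)
  also have "\<dots> = ennreal ((Psi x0 h0 / \<gamma>) * (1 / real k))" by (simp only: mult.commute)
  also have "\<dots> \<le> ennreal ((2 * (Ft x0 - Ft xs)
              + 4 * \<gamma> / (real n * Min (\<beta> ` {..<n}))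
                  * ((1 / real n) * (\<Sum>i<n. w i * (norm (h0 i - \<alpha> i *\<^sub>R
                        G i (shiftT (\<alpha> i) (xm i) xs)))\<^sup>2))
              + (1 / \<gamma>) * (norm (x0 - xs))\<^sup>2) * (1 / real k))"
  proof (rule ennreal_leI, rule mult_right_mono)
    have e1: "Psi x0 h0 / \<gamma> = 4 * \<gamma> / (real n * Min (\<beta> ` {..<n}))
                  * ((1 / real n) * (\<Sum>i<n. w i * (norm (h0 i - \<alpha> i *\<^sub>R
                        G i (shiftT (\<alpha> i) (xm i) xs)))\<^sup>2))
              + (1 / \<gamma>) * (norm (x0 - xs))\<^sup>2"
      unfolding Psi_def Mc_def bmin_def sig_def hs_def gi_def using g
      by (simp add: field_simps power2_eq_square)
    have e2: "0 \<le> Ft x0 - Ft xs" using Dl_nn[of x0] unfolding Dl_def .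
    show "Psi x0 h0 / \<gamma> \<le> 2 * (Ft x0 - Ft xs)
              + 4 * \<gamma> / (real n * Min (\<beta> ` {..<n}))
                  * ((1 / real n) * (\<Sum>i<n. w i * (norm (h0 i - \<alpha> i *\<^sub>R
                        G i (shiftT (\<alpha> i) (xm i) xs)))\<^sup>2))
              + (1 / \<gamma>) * (norm (x0 - xs))\<^sup>2" unfolding e1 using e2 by simp
  qed simp
  finally show ?thesis .
qed

end

theorem theorem6:
  fixes n :: nat
    and f :: "nat \<Rightarrow> 'a::euclidean_space \<Rightarrow> real"
    and G :: "nat \<Rightarrow> 'a \<Rightarrow> 'a"
    and L :: "nat \<Rightarrow> real"
    and xm :: "nat \<Rightarrow> 'a"
    and \<alpha> :: "nat \<Rightarrow> real"
    and xs :: 'a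
    and w \<beta> :: "nat \<Rightarrow> real"
    and \<gamma> :: real
    and M :: "'m measure"
    and S :: "'s measure"
    and \<xi> :: "nat \<Rightarrow> nat \<Rightarrow> 'm \<Rightarrow> 's"
    and Q :: "nat \<Rightarrow> nat \<Rightarrow> 's \<Rightarrow> 'a \<Rightarrow> 'a"
    and x0 :: 'a
    and h0 :: "nat \<Rightarrow> 'a"
    and x :: "nat \<Rightarrow> 'm \<Rightarrow> 'a"
    and h :: "nat \<Rightarrow> nat \<Rightarrow> 'm \<Rightarrow> 'a"
    and k :: nat
  assumes n_pos: "n \<ge> 1"
    and convex: "\<And>i. i < n \<Longrightarrow> convex_on UNIV (f i)"
    and grad: "\<And>i y. i < n \<Longrightarrow> GDERIV (f i) y :> G i y"
    and smooth: "\<And>i y z. i < n \<Longrightarrow> norm (G i y - G i z) \<le> L i * norm (y - z)"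
    and minim_i: "\<And>i y. i < n \<Longrightarrow> f i (xm i) \<le> f i y"
    and alpha: "\<And>i. i < n \<Longrightarrow> 0 < \<alpha> i \<and> \<alpha> i < 1"
    and minim: "\<And>y. ftilde n f \<alpha> xm xs \<le> ftilde n f \<alpha> xm y"
    and w_nonneg: "\<And>i. i < n \<Longrightarrow> 0 \<le> w i"
    and beta: "\<And>i. i < n \<Longrightarrow> 0 < \<beta> i \<and> \<beta> i \<le> 1 / (w i + 1)"
    and prob: "prob_space M"
    and indep: "prob_space.indep_vars M (\<lambda>_. S) (\<lambda>(kk, i). \<xi> kk i) {(kk, i). i < n}"
    and Q_meas: "\<And>kk i. i < n \<Longrightarrow> (\<lambda>(s, v). Q kk i s v) \<in> borel_measurable (S \<Otimes>\<^sub>M borel)"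
    and Q_unbiased: "\<And>kk i v. i < n \<Longrightarrow>
        integrable M (\<lambda>\<omega>. Q kk i (\<xi> kk i \<omega>) v) \<and> (\<integral>\<omega>. Q kk i (\<xi> kk i \<omega>) v \<partial>M) = v"
    and Q_var: "\<And>kk i v. i < n \<Longrightarrow>
        integrable M (\<lambda>\<omega>. (norm (Q kk i (\<xi> kk i \<omega>) v - v))\<^sup>2) \<and>
        (\<integral>\<omega>. (norm (Q kk i (\<xi> kk i \<omega>) v - v))\<^sup>2 \<partial>M) \<le> w i * (norm v)\<^sup>2"
    and x_init: "\<And>\<omega>. x 0 \<omega> = x0"
    and h_init: "\<And>i \<omega>. h 0 i \<omega> = h0 i"
    and h_step: "\<And>kk i \<omega>. h (Suc kk) i \<omega> = h kk i \<omega> + \<beta> i *\<^sub>R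
        Q kk i (\<xi> kk i \<omega>) (\<alpha> i *\<^sub>R G i (shiftT (\<alpha> i) (xm i) (x kk \<omega>)) - h kk i \<omega>)"
    and x_step: "\<And>kk \<omega>. x (Suc kk) \<omega> = x kk \<omega> - \<gamma> *\<^sub>R ((1 / real n) *\<^sub>R
        (\<Sum>i<n. h kk i \<omega> + Q kk i (\<xi> kk i \<omega>)
            (\<alpha> i *\<^sub>R G i (shiftT (\<alpha> i) (xm i) (x kk \<omega>)) - h kk i \<omega>)))"
    and gamma_pos: "0 < \<gamma>"
    and gamma_le: "\<gamma> \<le> 1 / (4 * ((1 / real n) * (\<Sum>i<n. (\<alpha> i)\<^sup>2 * L i)
        + 2 * Max ((\<lambda>i. L i * (\<alpha> i)\<^sup>2 * w i) ` {..<n}) / real n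
        + 4 * Max ((\<lambda>i. \<beta> i * w i * L i * (\<alpha> i)\<^sup>2) ` {..<n})
            / (real n * Min (\<beta> ` {..<n}))))"
    and k_pos: "k \<ge> 1"
  shows "(\<integral>\<^sup>+ \<omega>. ennreal (ftilde n f \<alpha> xm ((1 / real k) *\<^sub>R (\<Sum>j=1..k. x j \<omega>))
              - ftilde n f \<alpha> xm xs) \<partial>M)
         \<le> ennreal ((2 * (ftilde n f \<alpha> xm x0 - ftilde n f \<alpha> xm xs)
              + 4 * \<gamma> / (real n * Min (\<beta> ` {..<n}))
                  * ((1 / real n) * (\<Sum>i<n. w i * (norm (h0 i - \<alpha> i *\<^sub>R
                        G i (shiftT (\<alpha> i) (xm i) xs)))\<^sup>2))
              + (1 / \<gamma>) * (norm (x0 - xs))\<^sup>2) * (1 / real k))"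
proof -
  interpret full n f G L xm \<alpha> xs w \<beta> \<gamma> M S \<xi> Q x0 h0 x h
  proof (intro full.intro detset2.intro detset.intro detset2_axioms.intro full_axioms.intro)
  qed (fact n_pos convex grad smooth alpha minim w_nonneg beta gamma_pos gamma_le prob indep Q_meas Q_unbiased Q_var
         x_init h_init h_step x_step)+
  show ?thesis by (rule final[OF k_pos])
qed

end
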